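(* Let $X$ be a connected simple graph with countable vertex set, bounded degree and no vertex of degree one; let $M=\sup_{x\in VX}\deg(x)$ and $\alpha=\frac{M+\sqrt{M^2+4M}}{2}$. With the bounded operators $A_X$, $Q_X$, $C_m$, $B_m$, $R_m$, $N_{X,m}$ on $\ell^2(VX)$ defined below, for all complex $u$ with $|u|<1/\alpha$: (1) $\Big(\sum_{m=1}^\infty B_m u^m\Big)(I-uA_X+u^2Q_X)=A_Xu-2Q_Xu^2+(Q_X-I)(I-uA_X+u^2Q_X)u^2$; (2) $\sum_{m=1}^\infty N_{X,m}u^m=u(A_X-2Q_Xu)(I-uA_X+u^2Q_X)^{-1}+(Q_X-I)\frac{u^2}{1-u^2}+\sum_{m=3}^\infty R_m u^m$.
   Context: A graph $X=(VX,EX)$ has maps $e\mapsto(o(e),t(e))$, $e\mapsto\bar e$ with $\bar e\ne e$, $\bar{\bar e}=e$, $o(e)=t(\bar e)$; it is simple if it has no loops and no multiple edges. $E_x=\{e:o(e)=x\}$, $\deg(x)=|E_x|$. A path $c=(e_1,\dots,e_n)$ (with $t(e_i)=o(e_{i+1})$, $o(c)=o(e_1)$, $t(c)=t(e_n)$, length $\ell(c)=n$; a vertex is a path of length $0$) is geodesic if it has no back-tracking ($e_{i+1}\neq\bar e_i$ for all $i$); a geodesic loop is a closed ($o(c)=t(c)$) geodesic path. For $f\in\ell^2(VX)$: $(A_Xf)(x)=\sum_{e\in E_x}f(t(e))$, $(D_Xf)(x)=\deg(x)f(x)$, $\Delta_X=D_X-A_X$, $Q_X=D_X-I$; $(C_mf)(x)=\sum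 f(t(c))$ over all geodesic paths $c$ of length $m$ with $o(c)=x$ (so $C_0=I$). $B_m=C_m$ for $m=0,1,2$ and $B_m=C_m-(Q_X-I)\sum_{j=1}^{\lfloor m/2\rfloor}C_{m-2j}$ for $m\ge3$. Let $c_k(x)$ be the number of geodesic loops of length $k$ starting at $x$ and $(\Delta_Xc_k)(x)=\deg(x)c_k(x)-\sum_{e\in E_x}c_k(t(e))$. $R_m=0$ for $m=0,1,2$, and for $m\ge3$, $R_m$ is multiplication by $x\mapsto\sum_{j=1}^{\lceil m/2\rceil-1}j(\Delta_Xc_{m-2j})(x)$. $R_m^+=0$ for $m=0,1,2$ and $R_m^+=(Q_X-I)\delta_{2\mathbb Z}(m)+R_m$ for $m\ge3$, where $\delta_{2\mathbb Z}(m)$ is $1$ if $m$ is even and $0$ otherwise. $N_{X,m}=B_m+R_m^+$. *)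

theory Defs
  imports "HOL-Analysis.Analysis" "HOL-Library.Countable"
begin

text \<open>A simple graph on the vertex type 'v is given by a symmetric irreflexive
adjacency relation E (no loops; no multiple edges is automatic).
Operators on functions 'v => complex; they are applied to elements of l2(VX).\<close>

type_synonym 'v op = "('v \<Rightarrow> complex) \<Rightarrow> 'v \<Rightarrow> complex"

definition nbrs :: "('v \<Rightarrow> 'v \<Rightarrow> bool) \<Rightarrow> 'v \<Rightarrow> 'v set" where
  "nbrs E x = {y. E x y}"

definition deg :: "('v \<Rightarrow> 'v \<Rightarrow> bool) \<Rightarrow> 'v \<Rightarrow> nat" where
  "deg E x = card (nbrs E x)"

definition simple_graph :: "('v \<Rightarrow> 'v \<Rightarrow> bool) \<Rightarrow> bool" where
  "simple_graph E \<longleftrightarrow> (\<forall>x y. E x y \<longrightarrow> E y x) \<and> (\<forall>x. \<not> E x x)"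

definition connected_graph :: "('v \<Rightarrow> 'v \<Rightarrow> bool) \<Rightarrow> bool" where
  "connected_graph E \<longleftrightarrow> (\<forall>x y. E\<^sup>*\<^sup>* x y)"

definition bounded_degree :: "('v \<Rightarrow> 'v \<Rightarrow> bool) \<Rightarrow> bool" where
  "bounded_degree E \<longleftrightarrow> (\<forall>x. finite (nbrs E x)) \<and> (\<exists>K. \<forall>x. deg E x \<le> K)"

definition max_deg :: "('v \<Rightarrow> 'v \<Rightarrow> bool) \<Rightarrow> nat" where
  "max_deg E = Sup (range (deg E))"

definition graph_alpha :: "('v \<Rightarrow> 'v \<Rightarrow> bool) \<Rightarrow> real" where
  "graph_alpha E = (real (max_deg E) + sqrt (real (max_deg E) ^ 2 + 4 * real (max_deg E))) / 2"

text \<open>Paths are vertex lists [v0,...,vn] (length n path = list of length n+1);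
geodesic = consecutive vertices adjacent and no back-tracking.\<close>
definition geodesic :: "('v \<Rightarrow> 'v \<Rightarrow> bool) \<Rightarrow> 'v list \<Rightarrow> bool" where
  "geodesic E p \<longleftrightarrow> p \<noteq> [] \<and>
     (\<forall>i. i + 1 < length p \<longrightarrow> E (p ! i) (p ! (i + 1))) \<and>
     (\<forall>i. i + 2 < length p \<longrightarrow> p ! (i + 2) \<noteq> p ! i)"

definition geo_paths :: "('v \<Rightarrow> 'v \<Rightarrow> bool) \<Rightarrow> 'v \<Rightarrow> nat \<Rightarrow> 'v list set" where
  "geo_paths E x m = {p. geodesic E p \<and> length p = Suc m \<and> hd p = x}"

definition adj_op :: "('v \<Rightarrow> 'v \<Rightarrow> bool) \<Rightarrow> 'v op" where
  "adj_op E f x = (\<Sum>y\<in>nbrs E x. f y)"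

definition Q_op :: "('v \<Rightarrow> 'v \<Rightarrow> bool) \<Rightarrow> 'v op" where
  "Q_op E f x = (of_nat (deg E x) - 1) * f x"

definition C_op :: "('v \<Rightarrow> 'v \<Rightarrow> bool) \<Rightarrow> nat \<Rightarrow> 'v op" where
  "C_op E m f x = (\<Sum>p\<in>geo_paths E x m. f (last p))"

text \<open>(Q_X - I) is multiplication by deg - 2.\<close>
definition B_op :: "('v \<Rightarrow> 'v \<Rightarrow> bool) \<Rightarrow> nat \<Rightarrow> 'v op" where
  "B_op E m f x = (if m \<le> 2 then C_op E m f x
     else C_op E m f x - (of_nat (deg E x) - 2) * (\<Sum>j=1..m div 2. C_op E (m - 2 * j) f x))"

definition loop_count :: "('v \<Rightarrow> 'v \<Rightarrow> bool) \<Rightarrow> nat \<Rightarrow> 'v \<Rightarrow> nat" where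
  "loop_count E k x = card {p \<in> geo_paths E x k. last p = x}"

definition lap_loop :: "('v \<Rightarrow> 'v \<Rightarrow> bool) \<Rightarrow> nat \<Rightarrow> 'v \<Rightarrow> int" where
  "lap_loop E k x = int (deg E x) * int (loop_count E k x) - (\<Sum>y\<in>nbrs E x. int (loop_count E k y))"

text \<open>ceiling(m/2) = (m+1) div 2 for natural m.\<close>
definition R_op :: "('v \<Rightarrow> 'v \<Rightarrow> bool) \<Rightarrow> nat \<Rightarrow> 'v op" where
  "R_op E m f x = (if m \<le> 2 then 0
     else of_int (\<Sum>j=1..(m + 1) div 2 - 1. int j * lap_loop E (m - 2 * j) x) * f x)"

definition Rplus_op :: "('v \<Rightarrow> 'v \<Rightarrow> bool) \<Rightarrow> nat \<Rightarrow> 'v op" where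
  "Rplus_op E m f x = (if m \<le> 2 then 0
     else (if even m then (of_nat (deg E x) - 2) * f x else 0) + R_op E m f x)"

definition N_op :: "('v \<Rightarrow> 'v \<Rightarrow> bool) \<Rightarrow> nat \<Rightarrow> 'v op" where
  "N_op E m f x = B_op E m f x + Rplus_op E m f x"

definition L_op :: "('v \<Rightarrow> 'v \<Rightarrow> bool) \<Rightarrow> complex \<Rightarrow> 'v op" where
  "L_op E u f x = f x - u * adj_op E f x + u\<^sup>2 * Q_op E f x"

definition l2 :: "('v \<Rightarrow> complex) set" where
  "l2 = {f. (\<lambda>x. (cmod (f x))\<^sup>2) summable_on UNIV}"

definition l2norm :: "('v \<Rightarrow> complex) \<Rightarrow> real" where
  "l2norm f = sqrt (\<Sum>\<^sub>\<infinity>x. (cmod (f x))\<^sup>2)"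

definition op_series_sums :: "(nat \<Rightarrow> 'v op) \<Rightarrow> 'v op \<Rightarrow> bool" where
  "op_series_sums T S \<longleftrightarrow> (\<forall>f\<in>l2. S f \<in> l2) \<and>
     (\<forall>\<epsilon>>0. \<exists>N. \<forall>n\<ge>N. \<forall>f\<in>l2.
        (\<lambda>x. S f x - (\<Sum>m\<le>n. T m f x)) \<in> l2 \<and>
        l2norm (\<lambda>x. S f x - (\<Sum>m\<le>n. T m f x)) \<le> \<epsilon> * l2norm f)"

end

theory Submission
  imports Defs
begin


lemma l2_fin_le:
  assumes "f \<in> l2" "finite F"
  shows "L2_set (\<lambda>x. cmod (f x)) F \<le> l2norm f"
proof -
  have s: "(\<lambda>x. (cmod (f x))\<^sup>2) summable_on UNIV" using assms(1) by (simp add: l2_def)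
  have "(\<Sum>x\<in>F. (cmod (f x))\<^sup>2) = (\<Sum>\<^sub>\<infinity>x\<in>F. (cmod (f x))\<^sup>2)" using assms(2) by simp
  also have "\<dots> \<le> (\<Sum>\<^sub>\<infinity>x. (cmod (f x))\<^sup>2)"
    by (rule infsum_mono_neutral) (use assms(2) s in auto)
  finally show ?thesis unfolding L2_set_def l2norm_def by simp
qed

lemma l2norm_nonneg: "l2norm f \<ge> 0" by (simp add: l2norm_def infsum_nonneg)

lemma l2_point: "f \<in> l2 \<Longrightarrow> cmod (f x) \<le> l2norm f"
  using l2_fin_le[of f "{x}"] by simp




lemma l2_by_fin:
  assumes "c \<ge> 0" "\<And>F. finite F \<Longrightarrow> L2_set (\<lambda>x. cmod (f x)) F \<le> c"
  shows "f \<in> l2" "l2norm f \<le> c"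
proof -
  have b: "(\<Sum>x\<in>F. (cmod (f x))\<^sup>2) \<le> c\<^sup>2" if "finite F" for F
  proof -
    have "sqrt (\<Sum>x\<in>F. (cmod (f x))\<^sup>2) \<le> c" using assms(2)[OF that] by (simp add: L2_set_def)
    moreover have nn: "0 \<le> (\<Sum>x\<in>F. (cmod (f x))\<^sup>2)" by (rule sum_nonneg) simp
    ultimately have "(sqrt (\<Sum>x\<in>F. (cmod (f x))\<^sup>2))\<^sup>2 \<le> c\<^sup>2"
      by (intro power_mono) simp_all
    then show ?thesis using nn by simp
  qed
  have s: "(\<lambda>x. (cmod (f x))\<^sup>2) summable_on UNIV"
  proof (rule nonneg_bdd_above_summable_on)
    show "bdd_above (sum (\<lambda>x. (cmod (f x))\<^sup>2) ` {F. F \<subseteq> UNIV \<and> finite F})"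
      unfolding bdd_above_def using b by blast
  qed simp
  then show "f \<in> l2" by (simp add: l2_def)
  have "(\<Sum>\<^sub>\<infinity>x. (cmod (f x))\<^sup>2) \<le> c\<^sup>2"
    by (rule infsum_le_finite_sums[OF s]) (rule b)
  then have "sqrt (\<Sum>\<^sub>\<infinity>x. (cmod (f x))\<^sup>2) \<le> sqrt (c\<^sup>2)" by (rule real_sqrt_le_mono)
  then show "l2norm f \<le> c" unfolding l2norm_def using assms(1) by simp
qed




lemma L2_cmod_add: "L2_set (\<lambda>x. cmod (f x + g x)) F \<le> L2_set (\<lambda>x. cmod (f x)) F + L2_set (\<lambda>x. cmod (g x)) F"
proof -
  have "L2_set (\<lambda>x. cmod (f x + g x)) F \<le> L2_set (\<lambda>x. cmod (f x) + cmod (g x)) F"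
    by (rule L2_set_mono) (auto intro: norm_triangle_ineq)
  also have "\<dots> \<le> L2_set (\<lambda>x. cmod (f x)) F + L2_set (\<lambda>x. cmod (g x)) F"
    by (rule L2_set_triangle_ineq)
  finally show ?thesis .
qed

lemma l2_add:
  assumes "f \<in> l2" "g \<in> l2"
  shows "(\<lambda>x. f x + g x) \<in> l2" "l2norm (\<lambda>x. f x + g x) \<le> l2norm f + l2norm g"
proof -
  have *: "L2_set (\<lambda>x. cmod (f x + g x)) F \<le> l2norm f + l2norm g" if "finite F" for F
    using L2_cmod_add[of f g F] l2_fin_le[OF assms(1) that] l2_fin_le[OF assms(2) that] by linarith
  have "0 \<le> l2norm f + l2norm g" using l2norm_nonneg[of f] l2norm_nonneg[of g] by linarith
  from l2_by_fin[OF this *] show "(\<lambda>x. f x + g x) \<in> l2" "l2norm (\<lambda>x. f x + g x) \<le> l2norm f + l2norm g" by auto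
qed

lemma l2_mult:
  assumes "f \<in> l2" "\<And>x. cmod (h x) \<le> c"
  shows "(\<lambda>x. h x * f x) \<in> l2" "l2norm (\<lambda>x. h x * f x) \<le> c * l2norm f"
proof -
  have c0: "0 \<le> c" using assms(2)[of undefined] norm_ge_zero order_trans by blast
  have *: "L2_set (\<lambda>x. cmod (h x * f x)) F \<le> c * l2norm f" if "finite F" for F
  proof -
    have "L2_set (\<lambda>x. cmod (h x * f x)) F \<le> L2_set (\<lambda>x. c * cmod (f x)) F"
      by (rule L2_set_mono) (auto simp: norm_mult intro!: mult_right_mono assms(2))
    also have "\<dots> = c * L2_set (\<lambda>x. cmod (f x)) F" using c0 by (simp add: L2_set_right_distrib)
    also have "\<dots> \<le> c * l2norm f" using l2_fin_le[OF assms(1) that] c0 by (rule mult_left_mono)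
    finally show ?thesis .
  qed
  have "0 \<le> c * l2norm f" using c0 l2norm_nonneg[of f] by simp
  from l2_by_fin[OF this *] show "(\<lambda>x. h x * f x) \<in> l2" "l2norm (\<lambda>x. h x * f x) \<le> c * l2norm f" by auto
qed

lemma l2_scale:
  assumes "f \<in> l2"
  shows "(\<lambda>x. a * f x) \<in> l2" "l2norm (\<lambda>x. a * f x) \<le> cmod a * l2norm f"
  using l2_mult[OF assms, of "\<lambda>x. a" "cmod a"] by auto

lemma l2_zero: "(\<lambda>x. 0) \<in> l2" "l2norm (\<lambda>x. 0) = 0"
  by (auto simp: l2_def l2norm_def)

lemma l2_diff:
  assumes "f \<in> l2" "g \<in> l2"
  shows "(\<lambda>x. f x - g x) \<in> l2" "l2norm (\<lambda>x. f x - g x) \<le> l2norm f + l2norm g"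
proof -
  have g': "(\<lambda>x. (-1) * g x) \<in> l2" "l2norm (\<lambda>x. (-1) * g x) \<le> l2norm g"
    using l2_scale[OF assms(2), of "-1"] by auto
  have e: "(\<lambda>x. f x - g x) = (\<lambda>x. f x + (\<lambda>x. (-1) * g x) x)" by auto
  show "(\<lambda>x. f x - g x) \<in> l2" unfolding e by (rule l2_add(1)[OF assms(1) g'(1)])
  show "l2norm (\<lambda>x. f x - g x) \<le> l2norm f + l2norm g" unfolding e
    using l2_add(2)[OF assms(1) g'(1)] g'(2) by linarith
qed

lemma L2_cmod_sum:
  fixes N :: nat shows "L2_set (\<lambda>x. cmod (\<Sum>m<N. G m x)) F \<le> (\<Sum>m<N. L2_set (\<lambda>x. cmod (G m x)) F)"
proof (induction N)
  case 0 then show ?case by (simp add: L2_set_def)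
next
  case (Suc N)
  have "L2_set (\<lambda>x. cmod (\<Sum>m<Suc N. G m x)) F = L2_set (\<lambda>x. cmod ((\<Sum>m<N. G m x) + G N x)) F" by simp
  also have "\<dots> \<le> L2_set (\<lambda>x. cmod (\<Sum>m<N. G m x)) F + L2_set (\<lambda>x. cmod (G N x)) F"
    by (rule L2_cmod_add)
  also have "\<dots> \<le> (\<Sum>m<Suc N. L2_set (\<lambda>x. cmod (G m x)) F)" using Suc by simp
  finally show ?case .
qed

lemma l2_suminf:
  assumes G: "\<And>m. G m \<in> l2" and b: "\<And>m. l2norm (G m) \<le> \<gamma> m" and s: "summable \<gamma>"
  shows "\<And>x. summable (\<lambda>m. G m x)" "(\<lambda>x. \<Sum>m. G m x) \<in> l2" "l2norm (\<lambda>x. \<Sum>m. G m x) \<le> (\<Sum>m. \<gamma> m)"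
proof -
  have g0: "\<gamma> m \<ge> 0" for m using b[of m] l2norm_nonneg[of "G m"] by linarith
  show sx: "summable (\<lambda>m. G m x)" for x
  proof (rule summable_comparison_test[OF _ s])
    show "\<exists>N. \<forall>n\<ge>N. norm (G n x) \<le> \<gamma> n" using l2_point[OF G] b order_trans by blast
  qed
  have *: "L2_set (\<lambda>x. cmod (\<Sum>m. G m x)) F \<le> (\<Sum>m. \<gamma> m)" if "finite F" for F
  proof -
    have lim: "(\<lambda>N. L2_set (\<lambda>x. cmod (\<Sum>m<N. G m x)) F) \<longlonglongrightarrow> L2_set (\<lambda>x. cmod (\<Sum>m. G m x)) F"
      unfolding L2_set_def
      by (intro tendsto_intros summable_LIMSEQ sx)
    show ?thesis
    proof (rule LIMSEQ_le_const2[OF lim], intro exI allI impI)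
      fix N :: nat
      have "L2_set (\<lambda>x. cmod (\<Sum>m<N. G m x)) F \<le> (\<Sum>m<N. L2_set (\<lambda>x. cmod (G m x)) F)"
        by (rule L2_cmod_sum)
      also have "\<dots> \<le> (\<Sum>m<N. \<gamma> m)"
        by (rule sum_mono) (use l2_fin_le[OF G that] b order_trans in blast)
      also have "\<dots> \<le> (\<Sum>m. \<gamma> m)" by (rule sum_le_suminf[OF s]) (use g0 in auto)
      finally show "L2_set (\<lambda>x. cmod (\<Sum>m<N. G m x)) F \<le> (\<Sum>m. \<gamma> m)" .
    qed
  qed
  have "0 \<le> (\<Sum>m. \<gamma> m)" using suminf_nonneg[OF s g0] .
  from l2_by_fin[OF this *] show "(\<lambda>x. \<Sum>m. G m x) \<in> l2" "l2norm (\<lambda>x. \<Sum>m. G m x) \<le> (\<Sum>m. \<gamma> m)" by auto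
qed

lemma op_series:
  fixes T :: "nat \<Rightarrow> ('v \<Rightarrow> complex) \<Rightarrow> 'v \<Rightarrow> complex"
  assumes T: "\<And>m f. f \<in> l2 \<Longrightarrow> T m f \<in> l2 \<and> l2norm (T m f) \<le> \<beta> m * l2norm f"
    and s: "summable \<beta>" and b0: "\<And>m. \<beta> m \<ge> 0"
  shows "op_series_sums T (\<lambda>f x. \<Sum>m. T m f x)"
    and "\<And>f x. f \<in> l2 \<Longrightarrow> summable (\<lambda>m. T m f x)"
proof -
  have sf: "summable (\<lambda>m. \<beta> m * l2norm f)" for f using summable_mult2[OF s] .
  show sx: "summable (\<lambda>m. T m f x)" if "f \<in> l2" for f x
    using l2_suminf(1)[of "\<lambda>m. T m f" "\<lambda>m. \<beta> m * l2norm f"] T[OF that] sf by blast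
  have Sl2: "(\<lambda>x. \<Sum>m. T m f x) \<in> l2" if "f \<in> l2" for f
    using l2_suminf(2)[of "\<lambda>m. T m f" "\<lambda>m. \<beta> m * l2norm f"] T[OF that] sf by blast
  show "op_series_sums T (\<lambda>f x. \<Sum>m. T m f x)"
    unfolding op_series_sums_def
  proof (intro conjI ballI allI impI)
    fix f :: "'v \<Rightarrow> complex" assume "f \<in> l2" then show "(\<lambda>x. \<Sum>m. T m f x) \<in> l2" by (rule Sl2)
  next
    fix \<epsilon> :: real assume "\<epsilon> > 0"
    from suminf_exist_split[OF this s] obtain N where N: "\<And>n. n \<ge> N \<Longrightarrow> norm (\<Sum>i. \<beta> (i + n)) < \<epsilon>" by blast
    show "\<exists>N. \<forall>n\<ge>N. \<forall>f\<in>l2. (\<lambda>x. (\<Sum>m. T m f x) - (\<Sum>m\<le>n. T m f x)) \<in> l2 \<and>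
        l2norm (\<lambda>x. (\<Sum>m. T m f x) - (\<Sum>m\<le>n. T m f x)) \<le> \<epsilon> * l2norm f"
    proof (intro exI[of _ N] allI impI ballI)
      fix n and f :: "'v \<Rightarrow> complex" assume n: "n \<ge> N" and f: "f \<in> l2"
      have e: "(\<lambda>x. (\<Sum>m. T m f x) - (\<Sum>m\<le>n. T m f x)) = (\<lambda>x. \<Sum>m. T (m + Suc n) f x)"
      proof
        fix x
        have "(\<Sum>m. T m f x) = (\<Sum>m. T (m + Suc n) f x) + (\<Sum>m<Suc n. T m f x)"
          by (rule suminf_split_initial_segment[OF sx[OF f]])
        then show "(\<Sum>m. T m f x) - (\<Sum>m\<le>n. T m f x) = (\<Sum>m. T (m + Suc n) f x)"
          by (simp add: lessThan_Suc_atMost)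
      qed
      have ss: "summable (\<lambda>m. \<beta> (m + Suc n) * l2norm f)"
        using summable_mult2[OF iffD2[OF summable_iff_shift s]] .
      have 1: "(\<lambda>x. \<Sum>m. T (m + Suc n) f x) \<in> l2"
        using l2_suminf(2)[of "\<lambda>m. T (m + Suc n) f" "\<lambda>m. \<beta> (m + Suc n) * l2norm f"] T[OF f] ss by blast
      have "l2norm (\<lambda>x. \<Sum>m. T (m + Suc n) f x) \<le> (\<Sum>m. \<beta> (m + Suc n) * l2norm f)"
        using l2_suminf(3)[of "\<lambda>m. T (m + Suc n) f" "\<lambda>m. \<beta> (m + Suc n) * l2norm f"] T[OF f] ss by blast
      also have "\<dots> = (\<Sum>m. \<beta> (m + Suc n)) * l2norm f"
        by (rule suminf_mult2[symmetric]) (rule iffD2[OF summable_iff_shift s])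
      also have "\<dots> \<le> \<epsilon> * l2norm f"
      proof (rule mult_right_mono[OF _ l2norm_nonneg])
        have "norm (\<Sum>i. \<beta> (i + Suc n)) < \<epsilon>" using N[of "Suc n"] n by simp
        then show "(\<Sum>m. \<beta> (m + Suc n)) \<le> \<epsilon>" by simp
      qed
      finally show "(\<lambda>x. (\<Sum>m. T m f x) - (\<Sum>m\<le>n. T m f x)) \<in> l2 \<and>
        l2norm (\<lambda>x. (\<Sum>m. T m f x) - (\<Sum>m\<le>n. T m f x)) \<le> \<epsilon> * l2norm f"
        unfolding e using 1 by simp
    qed
  qed
qed




lemma sq_sum_le:
  assumes "finite S"
  shows "(cmod (\<Sum>y\<in>S. a y))\<^sup>2 \<le> real (card S) * (\<Sum>y\<in>S. (cmod (a y))\<^sup>2)"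
proof -
  have "cmod (\<Sum>y\<in>S. a y) \<le> (\<Sum>y\<in>S. \<bar>cmod (a y)\<bar> * \<bar>1\<bar>)" by (simp add: norm_sum)
  also have "\<dots> \<le> L2_set (\<lambda>y. cmod (a y)) S * L2_set (\<lambda>y. 1) S" by (rule L2_set_mult_ineq)
  finally have 1: "cmod (\<Sum>y\<in>S. a y) \<le> L2_set (\<lambda>y. cmod (a y)) S * sqrt (real (card S))"
    by (simp add: L2_set_constant)
  have "(cmod (\<Sum>y\<in>S. a y))\<^sup>2 \<le> (L2_set (\<lambda>y. cmod (a y)) S * sqrt (real (card S)))\<^sup>2"
    by (rule power_mono[OF 1]) simp
  also have "\<dots> = (L2_set (\<lambda>y. cmod (a y)) S)\<^sup>2 * real (card S)" by (simp add: power_mult_distrib)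
  also have "(L2_set (\<lambda>y. cmod (a y)) S)\<^sup>2 = (\<Sum>y\<in>S. (cmod (a y))\<^sup>2)"
    unfolding L2_set_def by (simp add: sum_nonneg)
  finally show ?thesis by (simp add: mult.commute)
qed

locale G =
  fixes E :: "'v \<Rightarrow> 'v \<Rightarrow> bool"
  assumes sg: "simple_graph E" and bd: "bounded_degree E" and M1: "max_deg E \<ge> 1"
begin

lemma sym: "E x y \<Longrightarrow> E y x" using sg by (auto simp: simple_graph_def)
lemma irr: "\<not> E x x" using sg by (auto simp: simple_graph_def)
lemma fin_nbrs: "finite (nbrs E x)" using bd by (auto simp: bounded_degree_def)

lemma deg_le: "deg E x \<le> max_deg E"
proof -
  obtain K where "\<forall>x. deg E x \<le> K" using bd by (auto simp: bounded_degree_def)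
  then have "bdd_above (range (deg E))" by (auto simp: bdd_above_def)
  then show ?thesis unfolding max_deg_def by (intro cSup_upper) auto
qed

lemma card_nbrs: "card (nbrs E x) = deg E x" by (simp add: deg_def)

lemma adj_bound:
  assumes f: "f \<in> l2"
  shows "adj_op E f \<in> l2" "l2norm (adj_op E f) \<le> real (max_deg E) * l2norm f"
proof -
  let ?M = "real (max_deg E)"
  have *: "L2_set (\<lambda>x. cmod (adj_op E f x)) F \<le> ?M * l2norm f" if F: "finite F" for F
  proof -
    define Y where "Y = (\<Union>x\<in>F. nbrs E x)"
    have fY: "finite Y" unfolding Y_def using F fin_nbrs by auto
    have "(\<Sum>x\<in>F. (cmod (adj_op E f x))\<^sup>2) \<le> (\<Sum>x\<in>F. ?M * (\<Sum>y\<in>nbrs E x. (cmod (f y))\<^sup>2))"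
    proof (rule sum_mono)
      fix x assume "x \<in> F"
      have "(cmod (adj_op E f x))\<^sup>2 \<le> real (card (nbrs E x)) * (\<Sum>y\<in>nbrs E x. (cmod (f y))\<^sup>2)"
        unfolding adj_op_def by (rule sq_sum_le[OF fin_nbrs])
      also have "\<dots> \<le> ?M * (\<Sum>y\<in>nbrs E x. (cmod (f y))\<^sup>2)"
        by (rule mult_right_mono) (auto simp: card_nbrs deg_le sum_nonneg)
      finally show "(cmod (adj_op E f x))\<^sup>2 \<le> ?M * (\<Sum>y\<in>nbrs E x. (cmod (f y))\<^sup>2)" .
    qed
    also have "\<dots> = ?M * (\<Sum>x\<in>F. \<Sum>y\<in>{y. y \<in> Y \<and> E x y}. (cmod (f y))\<^sup>2)"
      by (simp add: sum_distrib_left) (intro sum.cong refl, auto simp: Y_def nbrs_def)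
    also have "(\<Sum>x\<in>F. \<Sum>y\<in>{y. y \<in> Y \<and> E x y}. (cmod (f y))\<^sup>2) =
        (\<Sum>y\<in>Y. \<Sum>x\<in>{x. x \<in> F \<and> E x y}. (cmod (f y))\<^sup>2)"
      by (rule sum.swap_restrict[OF F fY])
    also have "(\<Sum>y\<in>Y. \<Sum>x\<in>{x. x \<in> F \<and> E x y}. (cmod (f y))\<^sup>2) \<le> (\<Sum>y\<in>Y. ?M * (cmod (f y))\<^sup>2)"
    proof (rule sum_mono)
      fix y assume "y \<in> Y"
      have "card {x. x \<in> F \<and> E x y} \<le> card (nbrs E y)"
        by (rule card_mono[OF fin_nbrs]) (auto simp: nbrs_def sym)
      then have "real (card {x. x \<in> F \<and> E x y}) \<le> ?M" using deg_le[of y] card_nbrs[of y] by linarith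
      then show "(\<Sum>x\<in>{x. x \<in> F \<and> E x y}. (cmod (f y))\<^sup>2) \<le> ?M * (cmod (f y))\<^sup>2"
        by (simp add: mult_right_mono)
    qed
    finally have c1: "(\<Sum>x\<in>F. (cmod (adj_op E f x))\<^sup>2) \<le> ?M * (\<Sum>y\<in>Y. ?M * (cmod (f y))\<^sup>2)"
      by (simp add: mult_left_mono)
    have c2: "(\<Sum>y\<in>Y. ?M * (cmod (f y))\<^sup>2) = ?M * (L2_set (\<lambda>y. cmod (f y)) Y)\<^sup>2"
      by (simp add: sum_distrib_left L2_set_def sum_nonneg)
    have c3: "(L2_set (\<lambda>y. cmod (f y)) Y)\<^sup>2 \<le> (l2norm f)\<^sup>2"
      by (rule power_mono[OF l2_fin_le[OF f fY]]) auto
    have c4: "?M * (?M * (L2_set (\<lambda>y. cmod (f y)) Y)\<^sup>2) \<le> ?M * (?M * (l2norm f)\<^sup>2)"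
      by (intro mult_left_mono c3) auto
    have "(\<Sum>x\<in>F. (cmod (adj_op E f x))\<^sup>2) \<le> (?M * l2norm f)\<^sup>2"
      using c1 c4 unfolding c2 by (simp add: power_mult_distrib power2_eq_square mult_ac)
    then have "sqrt (\<Sum>x\<in>F. (cmod (adj_op E f x))\<^sup>2) \<le> sqrt ((?M * l2norm f)\<^sup>2)" by (rule real_sqrt_le_mono)
    then show ?thesis using l2norm_nonneg[of f] by (simp add: L2_set_def)
  qed
  have "0 \<le> ?M * l2norm f" using l2norm_nonneg[of f] by simp
  from l2_by_fin[OF this *] show "adj_op E f \<in> l2" "l2norm (adj_op E f) \<le> ?M * l2norm f"
    by (auto simp: fun_eq_iff)
qed

lemma Q_bound:
  assumes f: "f \<in> l2"
  shows "Q_op E f \<in> l2" "l2norm (Q_op E f) \<le> real (max_deg E) * l2norm f"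
proof -
  have b: "cmod (of_nat (deg E x) - 1 :: complex) \<le> real (max_deg E)" for x
  proof -
    have "(of_nat (deg E x) - 1 :: complex) = of_real (real (deg E x) - 1)" by simp
    then have "cmod (of_nat (deg E x) - 1 :: complex) = \<bar>real (deg E x) - 1\<bar>" by (simp only: norm_of_real)
    then show ?thesis using deg_le[of x] M1 by simp
  qed
  have e: "Q_op E f = (\<lambda>x. (of_nat (deg E x) - 1) * f x)" by (simp add: fun_eq_iff Q_op_def)
  show "Q_op E f \<in> l2" "l2norm (Q_op E f) \<le> real (max_deg E) * l2norm f"
    unfolding e using l2_mult[OF f b] by auto
qed

lemma deg2_bound: "cmod (of_nat (deg E x) - 2 :: complex) \<le> real (max_deg E) + 2"
proof -
  have "(of_nat (deg E x) - 2 :: complex) = of_real (real (deg E x) - 2)" by simp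
  then have "cmod (of_nat (deg E x) - 2 :: complex) = \<bar>real (deg E x) - 2\<bar>" by (simp only: norm_of_real)
  then show ?thesis using deg_le[of x] by simp
qed

end



lemma geodesic_snoc:
  assumes p: "p \<noteq> []"
  shows "geodesic E (p @ [y]) \<longleftrightarrow> geodesic E p \<and> E (last p) y \<and> (2 \<le> length p \<longrightarrow> y \<noteq> p ! (length p - 2))"
proof -
  define n where "n = length p"
  have n1: "n \<ge> 1" using p by (cases p) (auto simp: n_def)
  have lp: "last p = p ! (n - 1)" using p by (simp add: n_def last_conv_nth)
  have a1: "(p @ [y]) ! i = p ! i" if "i < n" for i using that by (simp add: n_def nth_append)
  have a2: "(p @ [y]) ! n = y" by (simp add: n_def)
  show ?thesis
  proof
    assume g: "geodesic E (p @ [y])"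
    have e: "E ((p @ [y]) ! i) ((p @ [y]) ! (i + 1))" if "i + 1 < n + 1" for i
      using g that by (simp add: geodesic_def n_def)
    have nb: "(p @ [y]) ! (i + 2) \<noteq> (p @ [y]) ! i" if "i + 2 < n + 1" for i
      using g that by (simp add: geodesic_def n_def)
    have "geodesic E p" unfolding geodesic_def
    proof (intro conjI allI impI)
      show "p \<noteq> []" by (rule p)
    next
      fix i assume "i + 1 < length p"
      then show "E (p ! i) (p ! (i + 1))" using e[of i] a1[of i] a1[of "i+1"] by (simp add: n_def)
    next
      fix i assume "i + 2 < length p"
      then show "p ! (i + 2) \<noteq> p ! i" using nb[of i] a1[of i] a1[of "i+2"] by (simp add: n_def)
    qed
    moreover have "E (last p) y" using e[of "n - 1"] a1[of "n - 1"] a2 n1 lp by simp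
    moreover have "y \<noteq> p ! (length p - 2)" if "2 \<le> length p"
    proof -
      have k: "n - 2 + 2 = n" "n - 2 < n" using that by (auto simp: n_def)
      have "(p @ [y]) ! n \<noteq> (p @ [y]) ! (n - 2)" using nb[of "n - 2"] unfolding k(1) by simp
      then have "y \<noteq> p ! (n - 2)" unfolding a2 a1[OF k(2)] .
      then show ?thesis by (simp add: n_def)
    qed
    ultimately show "geodesic E p \<and> E (last p) y \<and> (2 \<le> length p \<longrightarrow> y \<noteq> p ! (length p - 2))" by blast
  next
    assume h: "geodesic E p \<and> E (last p) y \<and> (2 \<le> length p \<longrightarrow> y \<noteq> p ! (length p - 2))"
    then have g: "geodesic E p" and ey: "E (last p) y" and yb: "2 \<le> n \<Longrightarrow> y \<noteq> p ! (n - 2)"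
      by (auto simp: n_def)
    show "geodesic E (p @ [y])" unfolding geodesic_def
    proof (intro conjI allI impI)
      show "p @ [y] \<noteq> []" by simp
    next
      fix i assume i: "i + 1 < length (p @ [y])"
      show "E ((p @ [y]) ! i) ((p @ [y]) ! (i + 1))"
      proof (cases "i + 1 < n")
        case True
        then show ?thesis using g a1[of i] a1[of "i+1"] by (simp add: geodesic_def n_def)
      next
        case False
        then have "i = n - 1" using i by (simp add: n_def)
        then show ?thesis using ey lp a1[of i] a2 n1 by simp
      qed
    next
      fix i assume i: "i + 2 < length (p @ [y])"
      show "(p @ [y]) ! (i + 2) \<noteq> (p @ [y]) ! i"
      proof (cases "i + 2 < n")
        case True
        then show ?thesis using g a1[of i] a1[of "i+2"] by (simp add: geodesic_def n_def)
      next
        case False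
        then have i2: "i = n - 2" "2 \<le> n" using i by (auto simp: n_def)
        then have k: "i + 2 = n" by simp
        have 1: "(p @ [y]) ! (i + 2) = y" using k a2 by simp
        have 2: "(p @ [y]) ! i = p ! (n - 2)" using a1[of i] i2 by simp
        show ?thesis unfolding 1 2 using yb i2 by simp
      qed
    qed
  qed
qed

context G begin

lemma geo_paths_mem: "p \<in> geo_paths E x m \<Longrightarrow> geodesic E p \<and> length p = Suc m \<and> hd p = x \<and> p \<noteq> []"
  by (auto simp: geo_paths_def geodesic_def)

lemma geo_paths_0: "geo_paths E x 0 = {[x]}"
proof -
  have "p \<in> geo_paths E x 0 \<longleftrightarrow> p = [x]" for p
  proof
    assume "p \<in> geo_paths E x 0"
    then show "p = [x]" by (cases p) (auto simp: geo_paths_def)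
  next
    assume "p = [x]" then show "p \<in> geo_paths E x 0" by (auto simp: geo_paths_def geodesic_def)
  qed
  then show ?thesis by auto
qed

definition ext_set :: "nat \<Rightarrow> 'v list \<Rightarrow> 'v set" where
  "ext_set m p = {y \<in> nbrs E (last p). 1 \<le> m \<longrightarrow> y \<noteq> p ! (m - 1)}"

lemma geo_paths_Suc:
  "geo_paths E x (Suc m) = (\<lambda>(p, y). p @ [y]) ` (SIGMA p:geo_paths E x m. ext_set m p)"
proof (intro set_eqI iffI)
  fix q assume q: "q \<in> geo_paths E x (Suc m)"
  then have g: "geodesic E q" and l: "length q = Suc (Suc m)" and h: "hd q = x" by (auto simp: geo_paths_def)
  define p where "p = butlast q"
  have "q \<noteq> []" using l by auto
  then have qe: "q = p @ [last q]" by (simp add: p_def)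
  have lp: "length p = Suc m" using l by (simp add: p_def)
  then have pn: "p \<noteq> []" by auto
  have "geodesic E p \<and> E (last p) (last q) \<and> (2 \<le> length p \<longrightarrow> last q \<noteq> p ! (length p - 2))"
    using g geodesic_snoc[OF pn, of E "last q"] qe by simp
  moreover have "hd p = x" using h qe pn by (metis hd_append2)
  ultimately have "p \<in> geo_paths E x m" "last q \<in> ext_set m p"
    using lp by (auto simp: geo_paths_def ext_set_def nbrs_def)
  then show "q \<in> (\<lambda>(p, y). p @ [y]) ` (SIGMA p:geo_paths E x m. ext_set m p)"
    using qe by force
next
  fix q assume "q \<in> (\<lambda>(p, y). p @ [y]) ` (SIGMA p:geo_paths E x m. ext_set m p)"
  then obtain p y where q: "q = p @ [y]" and p: "p \<in> geo_paths E x m" and y: "y \<in> ext_set m p" by auto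
  from geo_paths_mem[OF p] have gp: "geodesic E p" "length p = Suc m" "hd p = x" "p \<noteq> []" by auto
  have "geodesic E (p @ [y])"
    using geodesic_snoc[OF gp(4), of E y] gp y by (auto simp: ext_set_def nbrs_def)
  then show "q \<in> geo_paths E x (Suc m)" using q gp by (auto simp: geo_paths_def)
qed

lemma fin_ext: "finite (ext_set m p)" unfolding ext_set_def using fin_nbrs by auto

lemma fin_paths: "finite (geo_paths E x m)"
proof (induction m)
  case 0 then show ?case by (simp add: geo_paths_0)
next
  case (Suc m) then show ?case unfolding geo_paths_Suc using fin_ext by auto
qed

lemma path_sum_Suc:
  "(\<Sum>q\<in>geo_paths E x (Suc m). h q) = (\<Sum>p\<in>geo_paths E x m. \<Sum>y\<in>ext_set m p. h (p @ [y]))"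
proof -
  have inj: "inj_on (\<lambda>(p, y). p @ [y]) (SIGMA p:geo_paths E x m. ext_set m p)"
    by (auto simp: inj_on_def)
  have "(\<Sum>q\<in>geo_paths E x (Suc m). h q) = (\<Sum>z\<in>(SIGMA p:geo_paths E x m. ext_set m p). h ((\<lambda>(p, y). p @ [y]) z))"
    unfolding geo_paths_Suc by (rule sum.reindex[OF inj, unfolded comp_def])
  also have "\<dots> = (\<Sum>(p, y)\<in>(SIGMA p:geo_paths E x m. ext_set m p). h (p @ [y]))"
    by (rule sum.cong) (auto split: prod.split)
  also have "\<dots> = (\<Sum>p\<in>geo_paths E x m. \<Sum>y\<in>ext_set m p. h (p @ [y]))"
    by (rule sum.Sigma[symmetric]) (use fin_paths fin_ext in auto)
  finally show ?thesis .
qed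

lemma card_ext: "card (ext_set m p) \<le> max_deg E"
proof -
  have "card (ext_set m p) \<le> card (nbrs E (last p))"
    by (rule card_mono[OF fin_nbrs]) (auto simp: ext_set_def)
  then show ?thesis using deg_le[of "last p"] card_nbrs by simp
qed

lemma card_paths: "card (geo_paths E x m) \<le> max_deg E ^ m"
proof (induction m)
  case 0 then show ?case by (simp add: geo_paths_0)
next
  case (Suc m)
  have "card (geo_paths E x (Suc m)) = (\<Sum>q\<in>geo_paths E x (Suc m). 1)" by simp
  also have "\<dots> = (\<Sum>p\<in>geo_paths E x m. \<Sum>y\<in>ext_set m p. 1)" by (rule path_sum_Suc)
  also have "\<dots> \<le> (\<Sum>p\<in>geo_paths E x m. max_deg E)" by (rule sum_mono) (simp add: card_ext)
  also have "\<dots> = card (geo_paths E x m) * max_deg E" by simp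
  also have "\<dots> \<le> max_deg E ^ m * max_deg E" using Suc by (rule mult_right_mono) simp
  finally show ?case by (simp add: mult.commute)
qed

lemma C0: "C_op E 0 f x = f x" by (simp add: C_op_def geo_paths_0)

lemma C1: "C_op E 1 f x = adj_op E f x"
proof -
  have "C_op E 1 f x = (\<Sum>p\<in>geo_paths E x 0. \<Sum>y\<in>ext_set 0 p. f (last (p @ [y])))"
    unfolding C_op_def using path_sum_Suc[where x=x and m=0 and h="\<lambda>q. f (last q)"] by simp
  also have "\<dots> = adj_op E f x" by (simp add: geo_paths_0 ext_set_def adj_op_def)
  finally show ?thesis .
qed

end


context G begin

lemma pen_nbr:
  assumes m: "1 \<le> m" and p: "p \<in> geo_paths E x m"
  shows "p ! (m - 1) \<in> nbrs E (last p)" "ext_set m p = nbrs E (last p) - {p ! (m - 1)}"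
proof -
  from geo_paths_mem[OF p] have g: "geodesic E p" and l: "length p = Suc m" and ne: "p \<noteq> []" by auto
  have a: "\<forall>i. i + 1 < length p \<longrightarrow> E (p ! i) (p ! (i + 1))" using g unfolding geodesic_def by blast
  have "E (p ! (m - 1)) (p ! (m - 1 + 1))" by (rule a[rule_format]) (use l m in simp)
  moreover have "m - 1 + 1 = m" using m by simp
  moreover have "last p = p ! m" using ne l by (simp add: last_conv_nth)
  ultimately show "p ! (m - 1) \<in> nbrs E (last p)" by (simp add: nbrs_def sym)
  show "ext_set m p = nbrs E (last p) - {p ! (m - 1)}" using m by (auto simp: ext_set_def)
qed

lemma CA:
  assumes m: "1 \<le> m"
  shows "C_op E m (adj_op E f) x = C_op E (Suc m) f x + C_op E (m - 1) (Q_op E f) x + (if m = 1 then f x else 0)"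
proof -
  have split: "adj_op E f (last p) = (\<Sum>y\<in>ext_set m p. f y) + f (p ! (m - 1))" if p: "p \<in> geo_paths E x m" for p
  proof -
    have "adj_op E f (last p) = f (p ! (m - 1)) + (\<Sum>y\<in>nbrs E (last p) - {p ! (m - 1)}. f y)"
      unfolding adj_op_def by (rule sum.remove[OF fin_nbrs pen_nbr(1)[OF m p]])
    then show ?thesis using pen_nbr(2)[OF m p] by simp
  qed
  have "C_op E m (adj_op E f) x = (\<Sum>p\<in>geo_paths E x m. (\<Sum>y\<in>ext_set m p. f y) + f (p ! (m - 1)))"
    unfolding C_op_def by (rule sum.cong[OF refl]) (rule split)
  also have "\<dots> = (\<Sum>p\<in>geo_paths E x m. \<Sum>y\<in>ext_set m p. f y) + (\<Sum>p\<in>geo_paths E x m. f (p ! (m - 1)))"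
    by (rule sum.distrib)
  also have "(\<Sum>p\<in>geo_paths E x m. \<Sum>y\<in>ext_set m p. f y) = C_op E (Suc m) f x"
    unfolding C_op_def using path_sum_Suc[where x=x and m=m and h="\<lambda>q. f (last q)"] by simp
  also have "(\<Sum>p\<in>geo_paths E x m. f (p ! (m - 1))) = C_op E (m - 1) (Q_op E f) x + (if m = 1 then f x else 0)"
  proof -
    obtain k where k: "m = Suc k" using m by (cases m) auto
    have "(\<Sum>p\<in>geo_paths E x m. f (p ! (m - 1))) = (\<Sum>q\<in>geo_paths E x k. \<Sum>y\<in>ext_set k q. f ((q @ [y]) ! k))"
      unfolding k using path_sum_Suc[where x=x and m=k and h="\<lambda>p. f (p ! k)"] by simp
    also have "\<dots> = (\<Sum>q\<in>geo_paths E x k. of_nat (card (ext_set k q)) * f (last q))"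
    proof (rule sum.cong[OF refl])
      fix q assume q: "q \<in> geo_paths E x k"
      then have l: "length q = Suc k" and ne: "q \<noteq> []" using geo_paths_mem by auto
      have "(q @ [y]) ! k = last q" for y using l ne by (simp add: nth_append last_conv_nth)
      then show "(\<Sum>y\<in>ext_set k q. f ((q @ [y]) ! k)) = of_nat (card (ext_set k q)) * f (last q)" by simp
    qed
    also have "\<dots> = C_op E (m - 1) (Q_op E f) x + (if m = 1 then f x else 0)"
    proof (cases k)
      case 0
      have "ext_set 0 [x] = nbrs E x" by (simp add: ext_set_def)
      then have e: "(\<Sum>q\<in>geo_paths E x k. of_nat (card (ext_set k q)) * f (last q)) = of_nat (deg E x) * f x"
        using 0 by (simp add: geo_paths_0 card_nbrs)
      have e2: "C_op E (m - 1) (Q_op E f) x = (of_nat (deg E x) - 1) * f x"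
        using 0 k by (simp add: C0 Q_op_def)
      show ?thesis unfolding e e2 using 0 k by (simp add: left_diff_distrib)
    next
      case (Suc j)
      have "of_nat (card (ext_set k q)) = (of_nat (deg E (last q)) - 1 :: complex)" if q: "q \<in> geo_paths E x k" for q
      proof -
        have k1: "1 \<le> k" using Suc by simp
        have "card (ext_set k q) = card (nbrs E (last q)) - 1"
          unfolding pen_nbr(2)[OF k1 q] using pen_nbr(1)[OF k1 q] fin_nbrs by (simp add: card_Diff_singleton)
        moreover have "card (nbrs E (last q)) \<ge> 1"
          using pen_nbr(1)[OF k1 q] fin_nbrs by (metis One_nat_def Suc_leI card_gt_0_iff empty_iff)
        ultimately show ?thesis by (simp add: card_nbrs of_nat_diff)
      qed
      note cq = this
      have e1: "C_op E (m - 1) (Q_op E f) x = (\<Sum>q\<in>geo_paths E x k. (of_nat (deg E (last q)) - 1) * f (last q))"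
        using k by (simp add: C_op_def Q_op_def)
      have e2: "(\<Sum>q\<in>geo_paths E x k. of_nat (card (ext_set k q)) * f (last q)) =
          (\<Sum>q\<in>geo_paths E x k. (of_nat (deg E (last q)) - 1) * f (last q))"
        by (rule sum.cong[OF refl]) (simp add: cq)
      show ?thesis unfolding e1 e2 using Suc k by simp
    qed
    finally show ?thesis .
  qed
  finally show ?thesis by (simp add: add.assoc)
qed

end


context G begin

abbreviation "MM \<equiv> real (max_deg E)"
abbreviation "al \<equiv> graph_alpha E"

lemma MM1: "MM \<ge> 1" using M1 by simp

lemma alpha_facts: "al \<ge> MM" "al \<ge> 1" "al\<^sup>2 = MM * al + MM"
proof -
  define s where "s = sqrt (MM\<^sup>2 + 4 * MM)"
  have s0: "s \<ge> 0" using MM1 by (simp add: s_def)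
  have hs: "s * s = MM * MM + 4 * MM" using MM1 unfolding s_def
    by (simp add: power2_eq_square[symmetric])
  have a: "al = (MM + s) / 2" by (simp add: graph_alpha_def s_def)
  have "MM \<le> s" unfolding s_def using MM1 by (intro real_le_rsqrt) auto
  then show "al \<ge> MM" unfolding a by simp
  then show "al \<ge> 1" using MM1 by linarith
  have "al\<^sup>2 = (MM * MM + 2 * MM * s + s * s) / 4" unfolding a by (simp add: power2_eq_square algebra_simps)
  also have "\<dots> = MM * al + MM" unfolding a hs by (simp add: algebra_simps)
  finally show "al\<^sup>2 = MM * al + MM" .
qed

lemma C0f: "C_op E 0 f = f" by (simp add: fun_eq_iff C0)
lemma C1s: "C_op E (Suc 0) f x = adj_op E f x" using C1 by simp
lemma C1f: "C_op E 1 f = adj_op E f" by (rule ext) (rule C1)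
lemma C1sf: "C_op E (Suc 0) f = adj_op E f" by (rule ext) (rule C1s)
lemma CSS: "C_op E (Suc (Suc k)) f = (\<lambda>x. C_op E (Suc k) (adj_op E f) x - C_op E k (Q_op E f) x - (if k = 0 then f x else 0))"
  using CA[of "Suc k" f] by (simp add: fun_eq_iff)

lemma diff3:
  assumes "a \<in> l2" "b \<in> l2" "c \<in> l2"
  shows "(\<lambda>x. a x - b x - c x) \<in> l2" "l2norm (\<lambda>x. a x - b x - c x) \<le> l2norm a + l2norm b + l2norm c"
proof -
  have 1: "(\<lambda>x. a x - b x) \<in> l2" "l2norm (\<lambda>x. a x - b x) \<le> l2norm a + l2norm b" using l2_diff[OF assms(1,2)] by auto
  show "(\<lambda>x. a x - b x - c x) \<in> l2" using l2_diff(1)[OF 1(1) assms(3)] by simp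
  show "l2norm (\<lambda>x. a x - b x - c x) \<le> l2norm a + l2norm b + l2norm c"
    using l2_diff(2)[OF 1(1) assms(3)] 1(2) by simp
qed

definition "Pc m \<longleftrightarrow> (\<forall>f\<in>l2. C_op E m f \<in> l2 \<and> l2norm (C_op E m f) \<le> 2 * al ^ m * l2norm f)"

lemma Pc0: "Pc 0" unfolding Pc_def C0f using l2norm_nonneg by auto

lemma Pc1: "Pc 1"
  unfolding Pc_def C1f
proof (intro ballI conjI)
  fix f :: "'v \<Rightarrow> complex" assume f: "f \<in> l2"
  show "adj_op E f \<in> l2" using adj_bound[OF f] by auto
  have "MM * l2norm f \<le> 2 * al * l2norm f"
    using alpha_facts MM1 l2norm_nonneg[of f] by (intro mult_right_mono) auto
  then show "l2norm (adj_op E f) \<le> 2 * al ^ 1 * l2norm f" using adj_bound(2)[OF f] by simp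
qed

lemma Pc2: "Pc 2"
  unfolding Pc_def
proof (intro ballI conjI)
  fix f :: "'v \<Rightarrow> complex" assume f: "f \<in> l2"
  have e: "C_op E 2 f = (\<lambda>x. adj_op E (adj_op E f) x - Q_op E f x - f x)"
    using CSS[of 0 f] by (simp add: numeral_2_eq_2 C1sf C0f)
  have A: "adj_op E f \<in> l2" "l2norm (adj_op E f) \<le> MM * l2norm f" using adj_bound[OF f] by auto
  have AA: "adj_op E (adj_op E f) \<in> l2" "l2norm (adj_op E (adj_op E f)) \<le> MM * l2norm (adj_op E f)"
    using adj_bound[OF A(1)] by auto
  have Q: "Q_op E f \<in> l2" "l2norm (Q_op E f) \<le> MM * l2norm f" using Q_bound[OF f] by auto
  show "C_op E 2 f \<in> l2" unfolding e by (rule diff3(1)[OF AA(1) Q(1) f])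
  have "l2norm (C_op E 2 f) \<le> MM * (MM * l2norm f) + MM * l2norm f + l2norm f"
    unfolding e using diff3(2)[OF AA(1) Q(1) f] AA(2) mult_left_mono[OF A(2), of MM] Q(2) MM1 by linarith
  also have "\<dots> = (MM * MM + MM + 1) * l2norm f" by (simp add: algebra_simps)
  also have "\<dots> \<le> 2 * al ^ 2 * l2norm f"
  proof (rule mult_right_mono[OF _ l2norm_nonneg])
    have "MM * MM \<le> MM * al" using alpha_facts(1) MM1 by (intro mult_left_mono) auto
    moreover have "1 \<le> MM * MM" using mult_mono[OF MM1 MM1] by simp
    moreover have "2 * al ^ 2 = 2 * (MM * al) + 2 * MM" using alpha_facts(3) by simp
    ultimately show "MM * MM + MM + 1 \<le> 2 * al ^ 2" using MM1 by linarith
  qed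
  finally show "l2norm (C_op E 2 f) \<le> 2 * al ^ 2 * l2norm f" .
qed

lemma Pc_step:
  assumes k: "k \<ge> 1" and a: "Pc k" and b: "Pc (Suc k)"
  shows "Pc (Suc (Suc k))"
  unfolding Pc_def
proof (intro ballI conjI)
  fix f :: "'v \<Rightarrow> complex" assume f: "f \<in> l2"
  have e: "C_op E (Suc (Suc k)) f = (\<lambda>x. C_op E (Suc k) (adj_op E f) x - C_op E k (Q_op E f) x - (\<lambda>x. 0) x)"
    using CSS[of k f] k by simp
  have A: "adj_op E f \<in> l2" "l2norm (adj_op E f) \<le> MM * l2norm f" using adj_bound[OF f] by auto
  have Q: "Q_op E f \<in> l2" "l2norm (Q_op E f) \<le> MM * l2norm f" using Q_bound[OF f] by auto
  have 1: "C_op E (Suc k) (adj_op E f) \<in> l2" "l2norm (C_op E (Suc k) (adj_op E f)) \<le> 2 * al ^ Suc k * l2norm (adj_op E f)"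
    using b A(1) unfolding Pc_def by auto
  have 2: "C_op E k (Q_op E f) \<in> l2" "l2norm (C_op E k (Q_op E f)) \<le> 2 * al ^ k * l2norm (Q_op E f)"
    using a Q(1) unfolding Pc_def by auto
  show "C_op E (Suc (Suc k)) f \<in> l2" unfolding e by (rule diff3(1)[OF 1(1) 2(1) l2_zero(1)])
  have p: "0 \<le> 2 * al ^ k" using alpha_facts by simp
  have p1: "0 \<le> 2 * al ^ Suc k" using alpha_facts by simp
  have m1: "2 * al ^ Suc k * l2norm (adj_op E f) \<le> 2 * al ^ Suc k * (MM * l2norm f)" by (rule mult_left_mono[OF A(2) p1])
  have m2: "2 * al ^ k * l2norm (Q_op E f) \<le> 2 * al ^ k * (MM * l2norm f)" by (rule mult_left_mono[OF Q(2) p])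
  have "l2norm (C_op E (Suc (Suc k)) f) \<le> 2 * al ^ Suc k * (MM * l2norm f) + 2 * al ^ k * (MM * l2norm f)"
  proof -
    have "l2norm (C_op E (Suc (Suc k)) f) \<le> l2norm (C_op E (Suc k) (adj_op E f)) + l2norm (C_op E k (Q_op E f))"
      unfolding e using diff3(2)[OF 1(1) 2(1) l2_zero(1)] by (simp add: l2norm_def)
    then show ?thesis by (rule order_trans) (intro add_mono order_trans[OF 1(2) m1] order_trans[OF 2(2) m2])
  qed
  also have "\<dots> = 2 * al ^ k * (MM * al + MM) * l2norm f" by (simp add: algebra_simps)
  also have "\<dots> = 2 * al ^ Suc (Suc k) * l2norm f" unfolding alpha_facts(3)[symmetric] by (simp add: power2_eq_square algebra_simps)
  finally show "l2norm (C_op E (Suc (Suc k)) f) \<le> 2 * al ^ Suc (Suc k) * l2norm f" .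
qed

lemma Pc_all: "Pc m"
proof -
  have "Pc (Suc k) \<and> Pc (Suc (Suc k))" for k
  proof (induction k)
    case 0 then show ?case using Pc1 Pc2 by (simp add: numeral_2_eq_2)
  next
    case (Suc k) then show ?case using Pc_step[of "Suc k"] by simp
  qed
  then show ?thesis using Pc0 by (cases m) auto
qed

lemma C_bound:
  assumes "f \<in> l2"
  shows "C_op E m f \<in> l2" "l2norm (C_op E m f) \<le> 2 * al ^ m * l2norm f"
  using Pc_all[of m] assms unfolding Pc_def by auto

end



lemma summable_sq_geom:
  fixes r :: real
  assumes r: "0 \<le> r" "r < 1"
  shows "summable (\<lambda>m. (real m + 1)\<^sup>2 * r ^ m)"
proof -
  let ?c1 = "\<lambda>n::nat. 1::real"
  have s1: "summable (\<lambda>n. diffs ?c1 n * x ^ n)" if "norm x < 1" for x :: real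
    by (rule termdiff_converges[of x 1]) (use that in \<open>auto intro: summable_geometric\<close>)
  have s2: "summable (\<lambda>n. diffs (diffs ?c1) n * r ^ n)"
    by (rule termdiff_converges[of r 1]) (use r s1 in auto)
  have e: "diffs (diffs ?c1) n = (real n + 1) * (real n + 2)" for n
    by (simp add: diffs_def algebra_simps)
  show ?thesis
  proof (rule summable_comparison_test'[OF s2])
    fix n :: nat
    have "(real n + 1)\<^sup>2 * r ^ n \<le> (real n + 1) * (real n + 2) * r ^ n"
      by (rule mult_right_mono) (use r in \<open>auto simp: power2_eq_square\<close>)
    then show "norm ((real n + 1)\<^sup>2 * r ^ n) \<le> diffs (diffs ?c1) n * r ^ n" using r by (simp add: e)
  qed
qed

lemma l2_sum:
  assumes "finite J" "\<And>j. j \<in> J \<Longrightarrow> g j \<in> l2"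
  shows "(\<lambda>x. \<Sum>j\<in>J. g j x) \<in> l2 \<and> l2norm (\<lambda>x. \<Sum>j\<in>J. g j x) \<le> (\<Sum>j\<in>J. l2norm (g j))"
  using assms
proof (induction J rule: finite_induct)
  case empty then show ?case by (simp add: l2_def l2norm_def)
next
  case (insert a J)
  then have IH: "(\<lambda>x. \<Sum>j\<in>J. g j x) \<in> l2" "l2norm (\<lambda>x. \<Sum>j\<in>J. g j x) \<le> (\<Sum>j\<in>J. l2norm (g j))" by auto
  have ga: "g a \<in> l2" using insert by auto
  have e: "(\<lambda>x. \<Sum>j\<in>insert a J. g j x) = (\<lambda>x. g a x + (\<lambda>x. \<Sum>j\<in>J. g j x) x)" using insert by simp
  show ?case unfolding e using l2_add[OF ga IH(1)] IH(2) insert by simp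
qed

context G begin

lemma lc_le: "loop_count E k x \<le> max_deg E ^ k"
proof -
  have "loop_count E k x \<le> card (geo_paths E x k)" unfolding loop_count_def
    by (rule card_mono[OF fin_paths]) auto
  then show ?thesis using card_paths[of x k] by linarith
qed

lemma lap_bound: "\<bar>real_of_int (lap_loop E k x)\<bar> \<le> 2 * MM ^ (k + 1)"
proof -
  have a: "real (deg E x * loop_count E k x) \<le> MM ^ (k + 1)"
  proof -
    have "deg E x * loop_count E k x \<le> max_deg E * max_deg E ^ k" by (intro mult_le_mono deg_le lc_le)
    then have "real (deg E x * loop_count E k x) \<le> real (max_deg E * max_deg E ^ k)" by (simp only: of_nat_le_iff)
    then show ?thesis by simp
  qed
  have b: "real (\<Sum>y\<in>nbrs E x. loop_count E k y) \<le> MM ^ (k + 1)"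
  proof -
    have "(\<Sum>y\<in>nbrs E x. loop_count E k y) \<le> (\<Sum>y\<in>nbrs E x. max_deg E ^ k)" by (intro sum_mono lc_le)
    also have "\<dots> = deg E x * max_deg E ^ k" by (simp add: card_nbrs)
    also have "\<dots> \<le> max_deg E * max_deg E ^ k" by (intro mult_le_mono deg_le) auto
    finally have "real (\<Sum>y\<in>nbrs E x. loop_count E k y) \<le> real (max_deg E * max_deg E ^ k)" by (simp only: of_nat_le_iff)
    then show ?thesis by simp
  qed
  have e: "real_of_int (lap_loop E k x) = real (deg E x * loop_count E k x) - real (\<Sum>y\<in>nbrs E x. loop_count E k y)"
    by (simp add: lap_loop_def)
  have n1: "0 \<le> real (deg E x * loop_count E k x)" by simp
  have n2: "0 \<le> real (\<Sum>y\<in>nbrs E x. loop_count E k y)" by (rule of_nat_0_le_iff)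
  have "\<bar>real (deg E x * loop_count E k x) - real (\<Sum>y\<in>nbrs E x. loop_count E k y)\<bar> \<le> 2 * MM ^ (k + 1)"
    using a b n1 n2 by (simp only: abs_le_iff) linarith
  then show ?thesis unfolding e .
qed

definition wR :: "nat \<Rightarrow> 'v \<Rightarrow> complex" where
  "wR m x = (if m \<le> 2 then 0 else of_int (\<Sum>j=1..(m + 1) div 2 - 1. int j * lap_loop E (m - 2 * j) x))"

lemma R_eq: "R_op E m f x = wR m x * f x" by (simp add: R_op_def wR_def)

lemma wR_bound: "cmod (wR m x) \<le> 2 * al * ((real m + 1)\<^sup>2 * al ^ m)"
proof (cases "m \<le> 2")
  case True then show ?thesis using alpha_facts by (simp add: wR_def)
next
  case False
  let ?J = "{1..(m + 1) div 2 - 1}"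
  have "cmod (wR m x) = \<bar>\<Sum>j\<in>?J. real j * real_of_int (lap_loop E (m - 2 * j) x)\<bar>"
    using False unfolding wR_def by (simp only: if_False norm_of_int) simp
  also have "\<dots> \<le> (\<Sum>j\<in>?J. \<bar>real j * real_of_int (lap_loop E (m - 2 * j) x)\<bar>)" by (rule sum_abs)
  also have "\<dots> \<le> (\<Sum>j\<in>?J. real m * (2 * MM ^ (m + 1)))"
  proof (rule sum_mono)
    fix j assume j: "j \<in> ?J"
    have jm: "real j \<le> real m" using j by auto
    have "MM ^ (m - 2 * j + 1) \<le> MM ^ (m + 1)" by (rule power_increasing) (use MM1 in auto)
    then have l: "\<bar>real_of_int (lap_loop E (m - 2 * j) x)\<bar> \<le> 2 * MM ^ (m + 1)" using lap_bound[of "m - 2*j" x] by linarith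
    show "\<bar>real j * real_of_int (lap_loop E (m - 2 * j) x)\<bar> \<le> real m * (2 * MM ^ (m + 1))"
      unfolding abs_mult using mult_mono[OF jm l] by simp
  qed
  also have "\<dots> = real (card ?J) * (real m * (2 * MM ^ (m + 1)))" by simp
  also have "\<dots> \<le> real m * (real m * (2 * MM ^ (m + 1)))"
    by (rule mult_right_mono) (use MM1 in auto)
  also have "\<dots> = (real m * real m) * (2 * MM ^ (m + 1))" by simp
  also have "\<dots> \<le> (real m + 1)\<^sup>2 * (2 * al ^ (m + 1))"
  proof (rule mult_mono)
    show "real m * real m \<le> (real m + 1)\<^sup>2" by (simp add: power2_eq_square algebra_simps)
    have "MM ^ (m + 1) \<le> al ^ (m + 1)" by (rule power_mono) (use alpha_facts MM1 in auto)
    then show "2 * MM ^ (m + 1) \<le> 2 * al ^ (m + 1)" by simp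
  qed (use MM1 in auto)
  finally show ?thesis by (simp add: algebra_simps)
qed

lemma R_bound:
  assumes f: "f \<in> l2"
  shows "R_op E m f \<in> l2" "l2norm (R_op E m f) \<le> 2 * al * ((real m + 1)\<^sup>2 * al ^ m) * l2norm f"
proof -
  have e: "R_op E m f = (\<lambda>x. wR m x * f x)" by (simp add: fun_eq_iff R_eq)
  show "R_op E m f \<in> l2" "l2norm (R_op E m f) \<le> 2 * al * ((real m + 1)\<^sup>2 * al ^ m) * l2norm f"
    unfolding e using l2_mult[OF f wR_bound] by auto
qed

lemma B_bound:
  assumes f: "f \<in> l2"
  shows "B_op E m f \<in> l2" "l2norm (B_op E m f) \<le> 2 * (MM + 3) * ((real m + 1)\<^sup>2 * al ^ m) * l2norm f"
proof -
  have K: "2 * al ^ m \<le> 2 * (MM + 3) * ((real m + 1)\<^sup>2 * al ^ m)"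
  proof -
    have "1 \<le> (real m + 1)\<^sup>2" by (simp add: power2_eq_square algebra_simps)
    then have "1 * 1 \<le> (MM + 3) * (real m + 1)\<^sup>2" using MM1 by (intro mult_mono) auto
    then have "1 \<le> (MM + 3) * (real m + 1)\<^sup>2" by simp
    then have "1 * al ^ m \<le> (MM + 3) * (real m + 1)\<^sup>2 * al ^ m"
      by (rule mult_right_mono) (use alpha_facts in simp)
    then show ?thesis by (simp add: algebra_simps)
  qed
  have "B_op E m f \<in> l2 \<and> l2norm (B_op E m f) \<le> 2 * (MM + 3) * ((real m + 1)\<^sup>2 * al ^ m) * l2norm f"
  proof (cases "m \<le> 2")
    case True
    then have e: "B_op E m f = C_op E m f" by (simp add: fun_eq_iff B_op_def)
    show ?thesis unfolding e using C_bound[OF f, of m] mult_right_mono[OF K l2norm_nonneg[of f]] by simp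
  next
    case False
    let ?J = "{1..m div 2}"
    let ?S = "\<lambda>x. \<Sum>j\<in>?J. C_op E (m - 2 * j) f x"
    have e: "B_op E m f = (\<lambda>x. C_op E m f x - (\<lambda>x. (of_nat (deg E x) - 2) * ?S x) x)"
      using False by (simp add: fun_eq_iff B_op_def)
    have S: "?S \<in> l2 \<and> l2norm ?S \<le> (\<Sum>j\<in>?J. l2norm (C_op E (m - 2 * j) f))"
      by (rule l2_sum) (use C_bound[OF f] in auto)
    have S2: "(\<Sum>j\<in>?J. l2norm (C_op E (m - 2 * j) f)) \<le> real m * (2 * al ^ m * l2norm f)"
    proof -
      have "(\<Sum>j\<in>?J. l2norm (C_op E (m - 2 * j) f)) \<le> (\<Sum>j\<in>?J. 2 * al ^ m * l2norm f)"
      proof (rule sum_mono)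
        fix j assume "j \<in> ?J"
        have "al ^ (m - 2 * j) \<le> al ^ m" by (rule power_increasing) (use alpha_facts in auto)
        then have "2 * al ^ (m - 2 * j) * l2norm f \<le> 2 * al ^ m * l2norm f"
          using l2norm_nonneg[of f] by (simp add: mult_right_mono)
        then show "l2norm (C_op E (m - 2 * j) f) \<le> 2 * al ^ m * l2norm f"
          using C_bound(2)[OF f, of "m - 2*j"] by linarith
      qed
      also have "\<dots> = real (m div 2) * (2 * al ^ m * l2norm f)" by simp
      also have "\<dots> \<le> real m * (2 * al ^ m * l2norm f)"
        by (rule mult_right_mono) (use alpha_facts l2norm_nonneg[of f] in auto)
      finally show ?thesis .
    qed
    have D: "(\<lambda>x. (of_nat (deg E x) - 2) * ?S x) \<in> l2" "l2norm (\<lambda>x. (of_nat (deg E x) - 2) * ?S x) \<le> (MM + 2) * l2norm ?S"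
      using l2_mult[OF conjunct1[OF S] deg2_bound] by auto
    have Cm: "C_op E m f \<in> l2" "l2norm (C_op E m f) \<le> 2 * al ^ m * l2norm f" using C_bound[OF f] by auto
    have "l2norm (B_op E m f) \<le> 2 * al ^ m * l2norm f + (MM + 2) * (real m * (2 * al ^ m * l2norm f))"
    proof -
      have "l2norm (B_op E m f) \<le> l2norm (C_op E m f) + l2norm (\<lambda>x. (of_nat (deg E x) - 2) * ?S x)"
        unfolding e by (rule l2_diff(2)[OF Cm(1) D(1)])
      moreover have "(MM + 2) * l2norm ?S \<le> (MM + 2) * (real m * (2 * al ^ m * l2norm f))"
        using S S2 MM1 by (intro mult_left_mono) auto
      ultimately show ?thesis using Cm(2) D(2) by linarith
    qed
    also have "\<dots> = (2 + 2 * (MM + 2) * real m) * al ^ m * l2norm f" by (simp add: algebra_simps)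
    also have "\<dots> \<le> 2 * (MM + 3) * ((real m + 1)\<^sup>2 * al ^ m) * l2norm f"
    proof -
      have "2 + 2 * (MM + 2) * real m \<le> 2 * (MM + 3) * (real m + 1)" using MM1 by (simp add: algebra_simps)
      also have "\<dots> \<le> 2 * (MM + 3) * (real m + 1)\<^sup>2"
        by (rule mult_left_mono) (use MM1 in \<open>auto simp: power2_eq_square\<close>)
      finally have "(2 + 2 * (MM + 2) * real m) * (al ^ m * l2norm f) \<le> 2 * (MM + 3) * (real m + 1)\<^sup>2 * (al ^ m * l2norm f)"
        by (rule mult_right_mono) (use alpha_facts l2norm_nonneg[of f] in simp)
      then show ?thesis by (simp add: algebra_simps)
    qed
    finally show ?thesis unfolding e using l2_diff(1)[OF Cm(1) D(1)] by simp
  qed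
  then show "B_op E m f \<in> l2" "l2norm (B_op E m f) \<le> 2 * (MM + 3) * ((real m + 1)\<^sup>2 * al ^ m) * l2norm f" by auto
qed

end



locale H = G E for E :: "'v \<Rightarrow> 'v \<Rightarrow> bool" +
  fixes u :: complex
  assumes small: "cmod u * graph_alpha E < 1"
begin

abbreviation "\<rho> \<equiv> cmod u"
abbreviation "tt \<equiv> cmod u * al"

lemma tt_facts: "0 \<le> tt" "tt < 1" "\<rho> < 1" "0 \<le> \<rho>"
proof -
  show "0 \<le> tt" using alpha_facts by simp
  show "tt < 1" by (rule small)
  have "\<rho> \<le> tt" using alpha_facts by (simp add: mult_le_cancel_left1 mult_left_mono[of 1 al \<rho>])
  then show "\<rho> < 1" using small by linarith
  show "0 \<le> \<rho>" by simp
qed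

definition "kap = \<rho> * MM + \<rho>\<^sup>2 * MM"

lemma kap_facts: "0 \<le> kap" "kap < 1"
proof -
  show "0 \<le> kap" by (simp add: kap_def)
  have a0: "al > 0" using alpha_facts by simp
  have e: "kap * al\<^sup>2 = MM * tt * al + MM * tt\<^sup>2" by (simp add: kap_def power2_eq_square algebra_simps)
  have 1: "MM * tt * al < MM * al" using tt_facts MM1 a0 by simp
  have "tt\<^sup>2 \<le> 1" using tt_facts by (simp add: power_le_one)
  then have 2: "MM * tt\<^sup>2 \<le> MM" using MM1 by (simp add: mult_le_cancel_left1)
  have "kap * al\<^sup>2 < 1 * al\<^sup>2" unfolding e using 1 2 alpha_facts(3) by simp
  then show "kap < 1" using a0 by (simp only: mult_less_cancel_right) simp
qed

lemma scale_pow_bound: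
  assumes "h \<in> l2" "l2norm h \<le> c * ((real m + 1)\<^sup>2 * al ^ m) * l2norm f"
  shows "(\<lambda>x. u ^ m * h x) \<in> l2" "l2norm (\<lambda>x. u ^ m * h x) \<le> c * ((real m + 1)\<^sup>2 * tt ^ m) * l2norm f"
proof -
  show "(\<lambda>x. u ^ m * h x) \<in> l2" using l2_scale(1)[OF assms(1)] .
  have "l2norm (\<lambda>x. u ^ m * h x) \<le> \<rho> ^ m * l2norm h" using l2_scale(2)[OF assms(1), of "u ^ m"] by (simp add: norm_power)
  also have "\<dots> \<le> \<rho> ^ m * (c * ((real m + 1)\<^sup>2 * al ^ m) * l2norm f)" by (rule mult_left_mono[OF assms(2)]) simp
  also have "\<dots> = c * ((real m + 1)\<^sup>2 * tt ^ m) * l2norm f" by (simp add: power_mult_distrib algebra_simps)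
  finally show "l2norm (\<lambda>x. u ^ m * h x) \<le> c * ((real m + 1)\<^sup>2 * tt ^ m) * l2norm f" .
qed

lemma summ_beta: "summable (\<lambda>m. c * ((real m + 1)\<^sup>2 * tt ^ m))"
  by (rule summable_mult) (rule summable_sq_geom[OF tt_facts(1,2)])

lemma beta_nonneg: "c \<ge> 0 \<Longrightarrow> 0 \<le> c * ((real m + 1)\<^sup>2 * tt ^ m)"
  using tt_facts by simp

definition Kop :: "'v op" where
  "Kop f x = u * adj_op E f x - u\<^sup>2 * Q_op E f x"

lemma L_eq: "L_op E u f x = f x - Kop f x" by (simp add: L_op_def Kop_def)

lemma K_bound:
  assumes f: "f \<in> l2"
  shows "Kop f \<in> l2" "l2norm (Kop f) \<le> kap * l2norm f"
proof -
  have A: "(\<lambda>x. u * adj_op E f x) \<in> l2" "l2norm (\<lambda>x. u * adj_op E f x) \<le> \<rho> * (MM * l2norm f)"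
    using l2_scale[OF adj_bound(1)[OF f], of u] adj_bound(2)[OF f] mult_left_mono[OF adj_bound(2)[OF f], of \<rho>]
    by auto
  have Q: "(\<lambda>x. u\<^sup>2 * Q_op E f x) \<in> l2" "l2norm (\<lambda>x. u\<^sup>2 * Q_op E f x) \<le> \<rho>\<^sup>2 * (MM * l2norm f)"
    using l2_scale[OF Q_bound(1)[OF f], of "u\<^sup>2"] mult_left_mono[OF Q_bound(2)[OF f], of "\<rho>\<^sup>2"]
    by (auto simp: norm_power)
  have e: "Kop f = (\<lambda>x. (\<lambda>x. u * adj_op E f x) x - (\<lambda>x. u\<^sup>2 * Q_op E f x) x)" by (simp add: fun_eq_iff Kop_def)
  show "Kop f \<in> l2" unfolding e by (rule l2_diff(1)[OF A(1) Q(1)])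
  show "l2norm (Kop f) \<le> kap * l2norm f" unfolding e using l2_diff(2)[OF A(1) Q(1)] A(2) Q(2)
    by (simp add: kap_def algebra_simps)
qed

lemma K_diff: "Kop (\<lambda>x. f x - g x) = (\<lambda>x. Kop f x - Kop g x)"
  by (simp add: fun_eq_iff Kop_def adj_op_def Q_op_def sum_subtractf algebra_simps)

lemma Kpow_diff: "(Kop ^^ n) (\<lambda>x. f x - g x) = (\<lambda>x. (Kop ^^ n) f x - (Kop ^^ n) g x)"
  by (induction n) (simp_all add: K_diff)

lemma K_suminf:
  assumes s: "\<And>y. summable (\<lambda>n. g n y)"
  shows "Kop (\<lambda>y. \<Sum>n. g n y) x = (\<Sum>n. Kop (g n) x)"
proof -
  have a: "adj_op E (\<lambda>y. \<Sum>n. g n y) x = (\<Sum>n. adj_op E (g n) x)"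
    unfolding adj_op_def by (rule suminf_sum[symmetric]) (rule s)
  have q: "Q_op E (\<lambda>y. \<Sum>n. g n y) x = (\<Sum>n. Q_op E (g n) x)"
    unfolding Q_op_def by (rule suminf_mult[symmetric]) (rule s)
  have sa: "summable (\<lambda>n. adj_op E (g n) x)" unfolding adj_op_def by (rule summable_sum) (rule s)
  have sq: "summable (\<lambda>n. Q_op E (g n) x)" unfolding Q_op_def by (rule summable_mult) (rule s)
  show ?thesis unfolding Kop_def a q
    using suminf_mult[OF sa, of u] suminf_mult[OF sq, of "u\<^sup>2"] suminf_diff[OF summable_mult[OF sa, of u] summable_mult[OF sq, of "u\<^sup>2"]]
    by simp
qed

lemma Kpow_bound:
  assumes f: "f \<in> l2"
  shows "(Kop ^^ n) f \<in> l2 \<and> l2norm ((Kop ^^ n) f) \<le> kap ^ n * l2norm f"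
proof (induction n)
  case 0 then show ?case using f by simp
next
  case (Suc n)
  then have "Kop ((Kop ^^ n) f) \<in> l2" "l2norm (Kop ((Kop ^^ n) f)) \<le> kap * l2norm ((Kop ^^ n) f)"
    using K_bound by auto
  moreover have "kap * l2norm ((Kop ^^ n) f) \<le> kap * (kap ^ n * l2norm f)"
    using Suc kap_facts by (intro mult_left_mono) auto
  ultimately show ?case by simp
qed

definition Linv :: "'v op" where
  "Linv f x = (\<Sum>n. (Kop ^^ n) f x)"

lemma Kpow_series: "op_series_sums (\<lambda>n. Kop ^^ n) Linv" "f \<in> l2 \<Longrightarrow> summable (\<lambda>n. (Kop ^^ n) f x)"
proof -
  have T: "\<And>m f. f \<in> l2 \<Longrightarrow> (Kop ^^ m) f \<in> l2 \<and> l2norm ((Kop ^^ m) f) \<le> kap ^ m * l2norm f"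
    by (rule Kpow_bound)
  have s: "summable (\<lambda>m. kap ^ m)" using kap_facts by (intro summable_geometric) auto
  have e: "Linv = (\<lambda>f x. \<Sum>m. (Kop ^^ m) f x)" by (simp add: fun_eq_iff Linv_def)
  show "op_series_sums (\<lambda>n. Kop ^^ n) Linv" unfolding e using op_series(1)[where T="\<lambda>n. Kop ^^ n" and \<beta>="\<lambda>m. kap ^ m", OF T s zero_le_power[OF kap_facts(1)]] by blast
  show "f \<in> l2 \<Longrightarrow> summable (\<lambda>n. (Kop ^^ n) f x)" using op_series(2)[where T="\<lambda>n. Kop ^^ n" and \<beta>="\<lambda>m. kap ^ m", OF T s zero_le_power[OF kap_facts(1)]] by blast
qed

lemma Linv_l2: "f \<in> l2 \<Longrightarrow> Linv f \<in> l2"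
  using Kpow_series(1) unfolding op_series_sums_def by blast

lemma L_Linv: assumes f: "f \<in> l2" shows "L_op E u (Linv f) = f"
proof
  fix x
  have s: "\<And>y. summable (\<lambda>n. (Kop ^^ n) f y)" using Kpow_series(2)[OF f] .
  have "Kop (Linv f) x = (\<Sum>n. Kop ((Kop ^^ n) f) x)"
    unfolding Linv_def by (rule K_suminf[OF s])
  also have "\<dots> = (\<Sum>n. (Kop ^^ Suc n) f x)" by simp
  also have "\<dots> = Linv f x - f x" unfolding Linv_def using suminf_split_head[OF s[of x]] by simp
  finally show "L_op E u (Linv f) x = f x" unfolding L_eq by simp
qed

lemma Linv_L: assumes f: "f \<in> l2" shows "Linv (L_op E u f) = f"
proof
  fix x
  have s: "summable (\<lambda>n. (Kop ^^ n) f x)" using Kpow_series(2)[OF f] .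
  have s1: "summable (\<lambda>n. (Kop ^^ Suc n) f x)" using s by (subst summable_Suc_iff)
  have e: "L_op E u f = (\<lambda>x. f x - Kop f x)" by (simp add: fun_eq_iff L_eq)
  have "Linv (L_op E u f) x = (\<Sum>n. (Kop ^^ n) f x - (Kop ^^ n) (Kop f) x)"
    unfolding Linv_def e Kpow_diff by simp
  also have "\<dots> = (\<Sum>n. (Kop ^^ n) f x - (Kop ^^ Suc n) f x)" by (simp add: funpow_swap1)
  also have "\<dots> = (\<Sum>n. (Kop ^^ n) f x) - (\<Sum>n. (Kop ^^ Suc n) f x)" by (rule suminf_diff[OF s s1, symmetric])
  also have "\<dots> = f x" using suminf_split_head[OF s] by simp
  finally show "Linv (L_op E u f) x = f x" .
qed

end


context H begin

definition TB :: "nat \<Rightarrow> 'v op" where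
  "TB m f x = (if m = 0 then 0 else u ^ m * B_op E m f x)"

definition SB :: "'v op" where "SB f x = (\<Sum>m. TB m f x)"

lemma TB_bound: "f \<in> l2 \<Longrightarrow> TB m f \<in> l2 \<and> l2norm (TB m f) \<le> (2 * (MM + 3) * ((real m + 1)\<^sup>2 * tt ^ m)) * l2norm f"
proof (cases "m = 0")
  case True
  assume f: "f \<in> l2"
  have "TB m f = (\<lambda>x. 0)" using True by (simp add: fun_eq_iff TB_def)
  then show ?thesis using True l2norm_nonneg[of f] tt_facts MM1 by (simp add: l2_def l2norm_def)
next
  case False
  assume f: "f \<in> l2"
  have e: "TB m f = (\<lambda>x. u ^ m * B_op E m f x)" using False by (simp add: fun_eq_iff TB_def)
  show ?thesis unfolding e using scale_pow_bound[OF B_bound[OF f]] by simp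
qed

lemma TB_series: "op_series_sums TB SB" "f \<in> l2 \<Longrightarrow> summable (\<lambda>m. TB m f x)"
proof -
  have T: "\<And>m f. f \<in> l2 \<Longrightarrow> TB m f \<in> l2 \<and> l2norm (TB m f) \<le> (2 * (MM + 3) * ((real m + 1)\<^sup>2 * tt ^ m)) * l2norm f"
    by (rule TB_bound)
  have b0: "\<And>m. 0 \<le> 2 * (MM + 3) * ((real m + 1)\<^sup>2 * tt ^ m)" using beta_nonneg MM1 by simp
  have e: "SB = (\<lambda>f x. \<Sum>m. TB m f x)" by (simp add: fun_eq_iff SB_def)
  show "op_series_sums TB SB" unfolding e
    using op_series(1)[where T=TB and \<beta>="\<lambda>m. 2 * (MM + 3) * ((real m + 1)\<^sup>2 * tt ^ m)", OF T summ_beta b0] by blast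
  show "f \<in> l2 \<Longrightarrow> summable (\<lambda>m. TB m f x)"
    using op_series(2)[where T=TB and \<beta>="\<lambda>m. 2 * (MM + 3) * ((real m + 1)\<^sup>2 * tt ^ m)", OF T summ_beta b0] by blast
qed

lemma Cpt: "h \<in> l2 \<Longrightarrow> cmod (u ^ k * C_op E k h x) \<le> 2 * tt ^ k * l2norm h"
proof -
  assume h: "h \<in> l2"
  have "cmod (C_op E k h x) \<le> 2 * al ^ k * l2norm h"
    using l2_point[OF C_bound(1)[OF h, of k], of x] C_bound(2)[OF h, of k] by linarith
  then have "\<rho> ^ k * cmod (C_op E k h x) \<le> \<rho> ^ k * (2 * al ^ k * l2norm h)" by (rule mult_left_mono) simp
  then show ?thesis by (simp add: norm_mult norm_power power_mult_distrib algebra_simps)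
qed

lemma C_lin: "C_op E k (L_op E u f) x = C_op E k f x - u * C_op E k (adj_op E f) x + u\<^sup>2 * C_op E k (Q_op E f) x"
  by (simp add: C_op_def L_op_def sum.distrib sum_subtractf sum_distrib_left)

definition aa :: "('v \<Rightarrow> complex) \<Rightarrow> 'v \<Rightarrow> nat \<Rightarrow> complex" where
  "aa f x k = u ^ k * C_op E k (L_op E u f) x"

context
  fixes f :: "'v \<Rightarrow> complex" and x :: 'v
  assumes f: "f \<in> l2"
begin


lemma partial:
  "(\<Sum>k\<le>Suc n. aa f x k) = (1 - u\<^sup>2) * f x - u ^ (n + 2) * C_op E (n + 2) f x + u ^ (n + 3) * C_op E (n + 1) (Q_op E f) x"
proof (induction n)
  case 0
  have c1: "C_op E 1 (adj_op E f) x = C_op E 2 f x + Q_op E f x + f x"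
    using CA[of 1 f x] by (simp add: C0 numeral_2_eq_2)
  have "(\<Sum>k\<le>Suc 0. aa f x k) = aa f x 0 + aa f x 1" by simp
  also have "\<dots> = (1 - u\<^sup>2) * f x - u ^ (0 + 2) * C_op E (0 + 2) f x + u ^ (0 + 3) * C_op E (0 + 1) (Q_op E f) x"
    unfolding aa_def C_lin c1 by (simp add: C0 C1 C1s L_op_def algebra_simps power2_eq_square power3_eq_cube numeral_2_eq_2)
  finally show ?case .
next
  case (Suc n)
  have c: "C_op E (n + 2) (adj_op E f) x = C_op E (n + 3) f x + C_op E (n + 1) (Q_op E f) x"
    using CA[of "n + 2" f x] by (simp add: numeral_3_eq_3 numeral_2_eq_2)
  have a2: "aa f x (n + 2) = u ^ (n + 2) * C_op E (n + 2) f x - u ^ (n + 3) * C_op E (n + 3) f x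
      - u ^ (n + 3) * C_op E (n + 1) (Q_op E f) x + u ^ (n + 4) * C_op E (n + 2) (Q_op E f) x"
    unfolding aa_def C_lin c by (simp add: algebra_simps power_add numeral_3_eq_3 numeral_2_eq_2 eval_nat_numeral)
  have "(\<Sum>k\<le>Suc (Suc n). aa f x k) = (\<Sum>k\<le>Suc n. aa f x k) + aa f x (n + 2)" by simp
  also have "\<dots> = (1 - u\<^sup>2) * f x - u ^ (n + 3) * C_op E (n + 3) f x + u ^ (n + 4) * C_op E (n + 2) (Q_op E f) x"
    unfolding Suc a2 by simp
  moreover have e: "Suc n + 2 = n + 3" "Suc n + 3 = n + 4" "Suc n + 1 = n + 2" by simp_all
  ultimately show ?case unfolding e by simp
qed

lemma Lf_l2: "L_op E u f \<in> l2"
proof -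
  have e: "L_op E u f = (\<lambda>x. f x - Kop f x)" by (simp add: fun_eq_iff L_eq)
  show ?thesis unfolding e by (rule l2_diff(1)[OF f K_bound(1)[OF f]])
qed

lemma aa_sums: "aa f x sums ((1 - u\<^sup>2) * f x)"
proof -
  let ?r = "\<lambda>n. - (u ^ (n + 2) * C_op E (n + 2) f x) + u\<^sup>2 * (u ^ (n + 1) * C_op E (n + 1) (Q_op E f) x)"
  have Ql: "Q_op E f \<in> l2" using Q_bound[OF f] by simp
  let ?c = "2 * l2norm f + 2 * l2norm (Q_op E f)"
  have r0: "?r \<longlonglongrightarrow> 0"
  proof (rule Lim_null_comparison)
    show "\<forall>\<^sub>F n in sequentially. norm (?r n) \<le> ?c * tt ^ n"
    proof (intro always_eventually allI)
      fix n
      have 1: "cmod (u ^ (n + 2) * C_op E (n + 2) f x) \<le> 2 * tt ^ n * l2norm f"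
      proof -
        have "tt ^ (n + 2) \<le> tt ^ n" using tt_facts by (intro power_decreasing) auto
        then have "2 * tt ^ (n + 2) * l2norm f \<le> 2 * tt ^ n * l2norm f" using l2norm_nonneg[of f] by (simp add: mult_right_mono)
        then show ?thesis using Cpt[OF f, of "n + 2" x] by linarith
      qed
      have 2: "cmod (u\<^sup>2 * (u ^ (n + 1) * C_op E (n + 1) (Q_op E f) x)) \<le> 2 * tt ^ n * l2norm (Q_op E f)"
      proof -
        have "\<rho>\<^sup>2 \<le> 1" using tt_facts by (simp add: power_le_one)
        have "tt ^ (n + 1) \<le> tt ^ n" using tt_facts by (intro power_decreasing) auto
        then have a: "cmod (u ^ (n + 1) * C_op E (n + 1) (Q_op E f) x) \<le> 2 * tt ^ n * l2norm (Q_op E f)"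
          using Cpt[OF Ql, of "n + 1" x] l2norm_nonneg[of "Q_op E f"] mult_right_mono[of "tt ^ (n + 1)" "tt ^ n" "2 * l2norm (Q_op E f)"]
          by (simp add: algebra_simps)
        have "cmod (u\<^sup>2 * (u ^ (n + 1) * C_op E (n + 1) (Q_op E f) x)) = \<rho>\<^sup>2 * cmod (u ^ (n + 1) * C_op E (n + 1) (Q_op E f) x)"
          by (simp add: norm_mult norm_power)
        also have "\<dots> \<le> 1 * cmod (u ^ (n + 1) * C_op E (n + 1) (Q_op E f) x)"
          using \<open>\<rho>\<^sup>2 \<le> 1\<close> by (intro mult_right_mono) auto
        finally show ?thesis using a by simp
      qed
      have "norm (?r n) \<le> cmod (u ^ (n + 2) * C_op E (n + 2) f x) + cmod (u\<^sup>2 * (u ^ (n + 1) * C_op E (n + 1) (Q_op E f) x))"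
        by (rule order_trans[OF norm_triangle_ineq]) simp
      also have "\<dots> \<le> ?c * tt ^ n" using 1 2 by (simp add: algebra_simps)
      finally show "norm (?r n) \<le> ?c * tt ^ n" .
    qed
    show "(\<lambda>n. ?c * tt ^ n) \<longlonglongrightarrow> 0"
      by (intro tendsto_mult_right_zero LIMSEQ_power_zero) (use tt_facts in auto)
  qed
  have eq: "(\<Sum>k\<le>Suc n. aa f x k) = (1 - u\<^sup>2) * f x + ?r n" for n
    unfolding partial by (simp add: algebra_simps power_add numeral_3_eq_3 numeral_2_eq_2)
  have "(\<lambda>n. (1 - u\<^sup>2) * f x + ?r n) \<longlonglongrightarrow> (1 - u\<^sup>2) * f x + 0"
    by (rule tendsto_add[OF tendsto_const r0])
  then have "(\<lambda>n. \<Sum>k\<le>Suc n. aa f x k) \<longlonglongrightarrow> (1 - u\<^sup>2) * f x" unfolding eq by simp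
  then have "(\<lambda>n. \<Sum>k\<le>n. aa f x k) \<longlonglongrightarrow> (1 - u\<^sup>2) * f x" by (rule LIMSEQ_imp_Suc)
  then show ?thesis by (simp add: sums_def_le)
qed

end
end


context H begin


definition pp :: "nat \<Rightarrow> complex" where "pp i = (if even i \<and> 2 \<le> i then u ^ i else 0)"

lemma u2: "cmod (u\<^sup>2) < 1" "1 - u\<^sup>2 \<noteq> 0"
proof -
  have "\<rho>\<^sup>2 < 1" using tt_facts by (simp add: power_less_one_iff abs_less_iff)
  then show "cmod (u\<^sup>2) < 1" by (simp add: norm_power)
  then show "1 - u\<^sup>2 \<noteq> 0" by auto
qed

lemma pp_sums: "pp sums (u\<^sup>2 / (1 - u\<^sup>2))"
proof -
  have sm: "strict_mono (\<lambda>n::nat. 2 * n + 2)" by (rule strict_monoI) simp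
  have z: "pp n = 0" if "n \<notin> range (\<lambda>n::nat. 2 * n + 2)" for n
  proof (rule ccontr)
    assume "pp n \<noteq> 0"
    then have "even n" "2 \<le> n" by (auto simp: pp_def split: if_splits)
    then have "n = 2 * (n div 2 - 1) + 2" by auto
    then show False using that by blast
  qed
  have e: "(\<lambda>n. pp (2 * n + 2)) = (\<lambda>n. u\<^sup>2 * (u\<^sup>2) ^ n)"
  proof
    fix n
    have "u ^ (2 * n + 2) = u\<^sup>2 * (u\<^sup>2) ^ n" by (metis power_add power_mult mult.commute)
    then show "pp (2 * n + 2) = u\<^sup>2 * (u\<^sup>2) ^ n" by (simp add: pp_def)
  qed
  have "(\<lambda>n. u\<^sup>2 * (u\<^sup>2) ^ n) sums (u\<^sup>2 * (1 / (1 - u\<^sup>2)))"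
    by (rule sums_mult[OF geometric_sums[OF u2(1)]])
  then have "(\<lambda>n. pp (2 * n + 2)) sums (u\<^sup>2 / (1 - u\<^sup>2))" unfolding e by simp
  then show ?thesis using sums_mono_reindex[of "\<lambda>n. 2 * n + 2" pp, OF sm z] by blast
qed

lemma pp_abs: "summable (\<lambda>i. norm (pp i))"
proof (rule summable_comparison_test'[of "\<lambda>i. \<rho> ^ i"])
  show "summable (\<lambda>i. \<rho> ^ i)" using tt_facts by (intro summable_geometric) auto
  show "norm (norm (pp n)) \<le> \<rho> ^ n" for n by (simp add: pp_def norm_power)
qed

lemma cp_eq: "(\<Sum>i\<le>m. pp i * a (m - i)) = (\<Sum>j=1..m div 2. u ^ (2 * j) * a (m - 2 * j))"
proof -
  have inj: "inj_on (\<lambda>j::nat. 2 * j) {1..m div 2}" by (auto simp: inj_on_def)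
  have "(\<Sum>i\<le>m. pp i * a (m - i)) = (\<Sum>i\<in>(\<lambda>j. 2 * j) ` {1..m div 2}. u ^ i * a (m - i))"
  proof (rule sum.mono_neutral_cong_right)
    show "(\<lambda>j. 2 * j) ` {1..m div 2} \<subseteq> {..m}" by auto
    show "\<forall>i\<in>{..m} - (\<lambda>j. 2 * j) ` {1..m div 2}. pp i * a (m - i) = 0"
    proof
      fix i assume i: "i \<in> {..m} - (\<lambda>j. 2 * j) ` {1..m div 2}"
      show "pp i * a (m - i) = 0"
      proof (cases "even i \<and> 2 \<le> i")
        case True
        then have "i = 2 * (i div 2)" "i div 2 \<in> {1..m div 2}" using i by auto
        then show ?thesis using i by blast
      qed (auto simp: pp_def)
    qed
    show "pp i * a (m - i) = u ^ i * a (m - i)" if "i \<in> (\<lambda>j. 2 * j) ` {1..m div 2}" for i using that by (auto simp: pp_def)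
  qed simp
  also have "\<dots> = (\<Sum>j=1..m div 2. u ^ (2 * j) * a (m - 2 * j))" by (rule sum.reindex_cong[OF inj refl]) simp
  finally show ?thesis .
qed

lemma part1_pt:
  assumes f: "f \<in> l2"
  shows "SB (L_op E u f) x = u * adj_op E f x - 2 * Q_op E f x * u\<^sup>2 + (of_nat (deg E x) - 2) * L_op E u f x * u\<^sup>2"
proof -
  let ?g = "L_op E u f"
  let ?a = "aa f x"
  define d where "d = (of_nat (deg E x) - 2 :: complex)"
  define cp where "cp m = (\<Sum>i\<le>m. pp i * ?a (m - i))" for m
  have as: "?a sums ((1 - u\<^sup>2) * f x)" by (rule aa_sums[OF f])
  have a_abs: "summable (\<lambda>k. norm (?a k))"
  proof (rule summable_comparison_test'[of "\<lambda>k. 2 * l2norm ?g * tt ^ k"])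
    show "summable (\<lambda>k. 2 * l2norm ?g * tt ^ k)" using tt_facts by (intro summable_mult summable_geometric) auto
    show "norm (norm (?a n)) \<le> 2 * l2norm ?g * tt ^ n" for n
      using Cpt[OF Lf_l2[OF f], of n x] unfolding aa_def by (simp add: algebra_simps)
  qed
  have cps: "cp sums (u\<^sup>2 * f x)"
  proof -
    have "cp sums ((\<Sum>k. pp k) * (\<Sum>k. ?a k))" unfolding cp_def by (rule Cauchy_product_sums[OF pp_abs a_abs])
    moreover have "(\<Sum>k. pp k) * (\<Sum>k. ?a k) = u\<^sup>2 * f x"
      using sums_unique[OF pp_sums, symmetric] sums_unique[OF as, symmetric] u2(2) by simp
    ultimately show ?thesis by simp
  qed
  have cp2: "cp 2 = u\<^sup>2 * ?g x"
    unfolding cp_def cp_eq by (simp add: aa_def C0)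
  have a0: "?a 0 = ?g x" by (simp add: aa_def C0)
  have TBe: "TB m ?g x = ?a m - d * cp m - (if m = 0 then ?a m else 0) + (if m = 2 then d * cp m else 0)" for m
  proof -
    consider "m = 0" | "m = 1" | "m = 2" | "3 \<le> m" by linarith
    then show ?thesis
    proof cases
      case 1 then show ?thesis by (simp add: TB_def cp_def pp_def)
    next
      case 2 then show ?thesis by (simp add: TB_def cp_def pp_def B_op_def aa_def)
    next
      case 3 then show ?thesis by (simp add: TB_def B_op_def aa_def)
    next
      case 4
      have e: "(\<Sum>j=1..m div 2. u ^ (2 * j) * ?a (m - 2 * j)) = (\<Sum>j=1..m div 2. u ^ m * C_op E (m - 2 * j) ?g x)"
      proof (rule sum.cong[OF refl])
        fix j assume "j \<in> {1..m div 2}"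
        then have "2 * j \<le> m" by auto
        then have "u ^ m = u ^ (2 * j) * u ^ (m - 2 * j)" by (simp add: power_add[symmetric])
        then show "u ^ (2 * j) * ?a (m - 2 * j) = u ^ m * C_op E (m - 2 * j) ?g x" by (simp add: aa_def)
      qed
      have "TB m ?g x = u ^ m * C_op E m ?g x - d * (\<Sum>j=1..m div 2. u ^ m * C_op E (m - 2 * j) ?g x)"
        using 4 by (simp add: TB_def B_op_def d_def sum_distrib_left algebra_simps)
      then show ?thesis using 4 unfolding cp_def cp_eq e by (simp add: aa_def)
    qed
  qed
  have s: "(\<lambda>m. ?a m - d * cp m - (if m = 0 then ?a m else 0) + (if m = 2 then d * cp m else 0)) sums
      ((1 - u\<^sup>2) * f x - d * (u\<^sup>2 * f x) - ?a 0 + d * cp 2)"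
    by (intro sums_add sums_diff sums_mult as cps sums_single[of 0 ?a] sums_single[of 2 "\<lambda>m. d * cp m"])
  then have "(\<lambda>m. TB m ?g x) sums ((1 - u\<^sup>2) * f x - d * (u\<^sup>2 * f x) - ?g x + d * (u\<^sup>2 * ?g x))"
    unfolding TBe a0 cp2 .
  then have "SB ?g x = (1 - u\<^sup>2) * f x - d * (u\<^sup>2 * f x) - ?g x + d * (u\<^sup>2 * ?g x)"
    unfolding SB_def by (rule sums_unique[symmetric])
  then show ?thesis unfolding d_def by (simp add: L_op_def Q_op_def algebra_simps power2_eq_square)
qed

end


context H begin

definition TN :: "nat \<Rightarrow> 'v op" where
  "TN m f x = (if m = 0 then 0 else u ^ m * N_op E m f x)"
definition TR :: "nat \<Rightarrow> 'v op" where
  "TR m f x = (if m < 3 then 0 else u ^ m * R_op E m f x)"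

definition wP :: "nat \<Rightarrow> 'v \<Rightarrow> complex" where
  "wP m x = (if m \<le> 2 then 0 else (if even m then of_nat (deg E x) - 2 else 0) + wR m x)"

lemma Rp_eq: "Rplus_op E m f x = wP m x * f x"
  by (simp add: Rplus_op_def wP_def R_eq algebra_simps)

lemma sq_ge1: "1 \<le> (real m + 1)\<^sup>2 * al ^ m"
proof -
  have "1 \<le> (real m + 1)\<^sup>2" by (simp add: power2_eq_square algebra_simps)
  moreover have "1 \<le> al ^ m" using alpha_facts by (simp add: one_le_power)
  ultimately show ?thesis using mult_mono[of 1 "(real m + 1)\<^sup>2" 1 "al ^ m"] by simp
qed

lemma wP_bound: "cmod (wP m x) \<le> (MM + 2 + 2 * al) * ((real m + 1)\<^sup>2 * al ^ m)"
proof -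
  have a: "cmod (if even m then of_nat (deg E x) - 2 else (0::complex)) \<le> (MM + 2) * ((real m + 1)\<^sup>2 * al ^ m)"
  proof -
    have "cmod (if even m then of_nat (deg E x) - 2 else (0::complex)) \<le> (MM + 2) * 1"
      using deg2_bound[of x] MM1 by auto
    also have "\<dots> \<le> (MM + 2) * ((real m + 1)\<^sup>2 * al ^ m)" by (rule mult_left_mono[OF sq_ge1]) (use MM1 in simp)
    finally show ?thesis .
  qed
  have "cmod (wP m x) \<le> cmod (if even m then of_nat (deg E x) - 2 else (0::complex)) + cmod (wR m x)"
    unfolding wP_def by (auto intro: norm_triangle_ineq simp: MM1)
  also have "\<dots> \<le> (MM + 2) * ((real m + 1)\<^sup>2 * al ^ m) + 2 * al * ((real m + 1)\<^sup>2 * al ^ m)"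
    by (rule add_mono[OF a wR_bound])
  finally show ?thesis by (simp add: algebra_simps)
qed

lemma N_bound:
  assumes f: "f \<in> l2"
  shows "N_op E m f \<in> l2" "l2norm (N_op E m f) \<le> (2 * (MM + 3) + (MM + 2 + 2 * al)) * ((real m + 1)\<^sup>2 * al ^ m) * l2norm f"
proof -
  have P: "(\<lambda>x. wP m x * f x) \<in> l2" "l2norm (\<lambda>x. wP m x * f x) \<le> (MM + 2 + 2 * al) * ((real m + 1)\<^sup>2 * al ^ m) * l2norm f"
    using l2_mult[OF f wP_bound] by auto
  have e: "N_op E m f = (\<lambda>x. B_op E m f x + (\<lambda>x. wP m x * f x) x)" by (simp add: fun_eq_iff N_op_def Rp_eq)
  show "N_op E m f \<in> l2" unfolding e by (rule l2_add(1)[OF B_bound(1)[OF f] P(1)])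
  show "l2norm (N_op E m f) \<le> (2 * (MM + 3) + (MM + 2 + 2 * al)) * ((real m + 1)\<^sup>2 * al ^ m) * l2norm f"
  proof -
    have "l2norm (N_op E m f) \<le> 2 * (MM + 3) * ((real m + 1)\<^sup>2 * al ^ m) * l2norm f + (MM + 2 + 2 * al) * ((real m + 1)\<^sup>2 * al ^ m) * l2norm f"
      unfolding e using l2_add(2)[OF B_bound(1)[OF f, of m] P(1)] B_bound(2)[OF f, of m] P(2) by linarith
    also have "\<dots> = (2 * (MM + 3) + (MM + 2 + 2 * al)) * ((real m + 1)\<^sup>2 * al ^ m) * l2norm f" by (simp add: algebra_simps)
    finally show ?thesis .
  qed
qed

lemma TN_series: "op_series_sums TN (\<lambda>f x. \<Sum>m. TN m f x)" "f \<in> l2 \<Longrightarrow> summable (\<lambda>m. TN m f x)"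
proof -
  let ?c = "2 * (MM + 3) + (MM + 2 + 2 * al)"
  have c0: "0 \<le> ?c" using MM1 alpha_facts by simp
  have T: "\<And>m f. f \<in> l2 \<Longrightarrow> TN m f \<in> l2 \<and> l2norm (TN m f) \<le> (?c * ((real m + 1)\<^sup>2 * tt ^ m)) * l2norm f"
  proof -
    fix m and f :: "'v \<Rightarrow> complex" assume f: "f \<in> l2"
    show "TN m f \<in> l2 \<and> l2norm (TN m f) \<le> (?c * ((real m + 1)\<^sup>2 * tt ^ m)) * l2norm f"
    proof (cases "m = 0")
      case True
      have "TN m f = (\<lambda>x. 0)" using True by (simp add: fun_eq_iff TN_def)
      then show ?thesis using True l2norm_nonneg[of f] c0 by (simp add: l2_def l2norm_def)
    next
      case False
      have e: "TN m f = (\<lambda>x. u ^ m * N_op E m f x)" using False by (simp add: fun_eq_iff TN_def)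
      show ?thesis unfolding e using scale_pow_bound[OF N_bound[OF f]] by simp
    qed
  qed
  have b0: "\<And>m. 0 \<le> ?c * ((real m + 1)\<^sup>2 * tt ^ m)" using beta_nonneg[OF c0] by simp
  show "op_series_sums TN (\<lambda>f x. \<Sum>m. TN m f x)"
    using op_series(1)[where T=TN and \<beta>="\<lambda>m. ?c * ((real m + 1)\<^sup>2 * tt ^ m)", OF T summ_beta b0] by blast
  show "f \<in> l2 \<Longrightarrow> summable (\<lambda>m. TN m f x)"
    using op_series(2)[where T=TN and \<beta>="\<lambda>m. ?c * ((real m + 1)\<^sup>2 * tt ^ m)", OF T summ_beta b0] by blast
qed

lemma TR_series: "op_series_sums TR (\<lambda>f x. \<Sum>m. TR m f x)" "f \<in> l2 \<Longrightarrow> summable (\<lambda>m. TR m f x)"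
proof -
  let ?c = "2 * al"
  have c0: "0 \<le> ?c" using alpha_facts by simp
  have T: "\<And>m f. f \<in> l2 \<Longrightarrow> TR m f \<in> l2 \<and> l2norm (TR m f) \<le> (?c * ((real m + 1)\<^sup>2 * tt ^ m)) * l2norm f"
  proof -
    fix m and f :: "'v \<Rightarrow> complex" assume f: "f \<in> l2"
    show "TR m f \<in> l2 \<and> l2norm (TR m f) \<le> (?c * ((real m + 1)\<^sup>2 * tt ^ m)) * l2norm f"
    proof (cases "m < 3")
      case True
      have "TR m f = (\<lambda>x. 0)" using True by (simp add: fun_eq_iff TR_def)
      then show ?thesis using True l2norm_nonneg[of f] c0 tt_facts by (simp add: l2_def l2norm_def)
    next
      case False
      have e: "TR m f = (\<lambda>x. u ^ m * R_op E m f x)" using False by (simp add: fun_eq_iff TR_def)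
      show ?thesis unfolding e using scale_pow_bound[OF R_bound[OF f]] by simp
    qed
  qed
  have b0: "\<And>m. 0 \<le> ?c * ((real m + 1)\<^sup>2 * tt ^ m)" using beta_nonneg[OF c0] by simp
  show "op_series_sums TR (\<lambda>f x. \<Sum>m. TR m f x)"
    using op_series(1)[where T=TR and \<beta>="\<lambda>m. ?c * ((real m + 1)\<^sup>2 * tt ^ m)", OF T summ_beta b0] by blast
  show "f \<in> l2 \<Longrightarrow> summable (\<lambda>m. TR m f x)"
    using op_series(2)[where T=TR and \<beta>="\<lambda>m. ?c * ((real m + 1)\<^sup>2 * tt ^ m)", OF T summ_beta b0] by blast
qed

lemma part2_pt:
  assumes f: "f \<in> l2"
  shows "(\<Sum>m. TN m f x) = u * (adj_op E (Linv f) x - 2 * Q_op E (Linv f) x * u)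
      + (of_nat (deg E x) - 2) * (u\<^sup>2 / (1 - u\<^sup>2)) * f x + (\<Sum>m. TR m f x)"
proof -
  define d where "d = (of_nat (deg E x) - 2 :: complex)"
  define w where "w = u\<^sup>2 / (1 - u\<^sup>2)"
  define ee where "ee m = pp m - (if m = 2 then u\<^sup>2 else 0)" for m
  have ee_sums: "ee sums (w - u\<^sup>2)"
    unfolding ee_def w_def by (intro sums_diff pp_sums sums_single[of 2 "\<lambda>m. u\<^sup>2"])
  have tn: "TN m f x = TB m f x + d * f x * ee m + TR m f x" for m
  proof -
    consider "m = 0" | "m = 1" | "m = 2" | "3 \<le> m" by linarith
    then show ?thesis
    proof cases
      case 1 then show ?thesis by (simp add: TN_def TB_def TR_def ee_def pp_def)
    next
      case 2 then show ?thesis by (simp add: TN_def TB_def TR_def ee_def pp_def N_op_def Rplus_op_def)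
    next
      case 3 then show ?thesis by (simp add: TN_def TB_def TR_def ee_def pp_def N_op_def Rplus_op_def)
    next
      case 4 then show ?thesis
        by (simp add: TN_def TB_def TR_def ee_def pp_def N_op_def Rplus_op_def d_def algebra_simps)
    qed
  qed
  have s: "(\<lambda>m. TB m f x + d * f x * ee m + TR m f x) sums (SB f x + d * f x * (w - u\<^sup>2) + (\<Sum>m. TR m f x))"
    unfolding SB_def
    by (intro sums_add sums_mult ee_sums summable_sums TB_series(2)[OF f] TR_series(2)[OF f])
  have "(\<Sum>m. TN m f x) = SB f x + d * f x * (w - u\<^sup>2) + (\<Sum>m. TR m f x)"
    unfolding tn using sums_unique[OF s] by simp
  moreover have "SB f x = u * adj_op E (Linv f) x - 2 * Q_op E (Linv f) x * u\<^sup>2 + d * f x * u\<^sup>2"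
    using part1_pt[OF Linv_l2[OF f], of x] L_Linv[OF f] by (simp add: d_def)
  ultimately show ?thesis unfolding d_def[symmetric] w_def[symmetric] by (simp add: algebra_simps power2_eq_square)
qed

end

theorem proposition4p2:
  fixes E :: "'v::countable \<Rightarrow> 'v \<Rightarrow> bool" and u :: complex
  assumes "simple_graph E" and "connected_graph E" and "bounded_degree E"
    and "\<forall>x. deg E x \<noteq> 1"
    and "cmod u < 1 / graph_alpha E"
  shows "(\<exists>S. op_series_sums (\<lambda>m f x. if m = 0 then 0 else u ^ m * B_op E m f x) S \<and>
            (\<forall>f\<in>l2. S (L_op E u f) =
               (\<lambda>x. u * adj_op E f x - 2 * Q_op E f x * u\<^sup>2
                    + (of_nat (deg E x) - 2) * L_op E u f x * u\<^sup>2)))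
    \<and> (\<exists>Linv S1 S2.
           (\<forall>f\<in>l2. Linv f \<in> l2 \<and> L_op E u (Linv f) = f \<and> Linv (L_op E u f) = f) \<and>
           op_series_sums (\<lambda>m f x. if m = 0 then 0 else u ^ m * N_op E m f x) S1 \<and>
           op_series_sums (\<lambda>m f x. if m < 3 then 0 else u ^ m * R_op E m f x) S2 \<and>
           (\<forall>f\<in>l2. S1 f =
              (\<lambda>x. u * (adj_op E (Linv f) x - 2 * Q_op E (Linv f) x * u)
                   + (of_nat (deg E x) - 2) * (u\<^sup>2 / (1 - u\<^sup>2)) * f x
                   + S2 f x)))"
proof -
  have M1: "max_deg E \<ge> 1"
  proof (rule ccontr)
    assume "\<not> max_deg E \<ge> 1"
    then have "max_deg E = 0" by simp
    then have "graph_alpha E = 0" by (simp add: graph_alpha_def)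
    then show False using assms(5) by simp
  qed
  interpret G E using assms(1,3) M1 by unfold_locales auto
  have "cmod u * graph_alpha E < 1"
  proof -
    have a: "graph_alpha E > 0" using alpha_facts by simp
    then show ?thesis using assms(5) by (simp add: pos_less_divide_eq)
  qed
  then interpret H E u by unfold_locales
  have tb: "(\<lambda>m f x. if m = 0 then 0 else u ^ m * B_op E m f x) = TB" by (simp add: fun_eq_iff TB_def)
  have tn: "(\<lambda>m f x. if m = 0 then 0 else u ^ m * N_op E m f x) = TN" by (simp add: fun_eq_iff TN_def)
  have tr: "(\<lambda>m f x. if m < 3 then 0 else u ^ m * R_op E m f x) = TR" by (simp add: fun_eq_iff TR_def)
  have P1: "\<exists>S. op_series_sums (\<lambda>m f x. if m = 0 then 0 else u ^ m * B_op E m f x) S \<and>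
            (\<forall>f\<in>l2. S (L_op E u f) =
               (\<lambda>x. u * adj_op E f x - 2 * Q_op E f x * u\<^sup>2
                    + (of_nat (deg E x) - 2) * L_op E u f x * u\<^sup>2))"
    unfolding tb using TB_series(1) part1_pt by (intro exI[of _ SB]) (auto simp: fun_eq_iff)
  have P2: "\<exists>Linv S1 S2.
           (\<forall>f\<in>l2. Linv f \<in> l2 \<and> L_op E u (Linv f) = f \<and> Linv (L_op E u f) = f) \<and>
           op_series_sums (\<lambda>m f x. if m = 0 then 0 else u ^ m * N_op E m f x) S1 \<and>
           op_series_sums (\<lambda>m f x. if m < 3 then 0 else u ^ m * R_op E m f x) S2 \<and>
           (\<forall>f\<in>l2. S1 f =
              (\<lambda>x. u * (adj_op E (Linv f) x - 2 * Q_op E (Linv f) x * u)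
                   + (of_nat (deg E x) - 2) * (u\<^sup>2 / (1 - u\<^sup>2)) * f x
                   + S2 f x))"
    unfolding tn tr
    apply (rule exI[of _ Linv], rule exI[of _ "\<lambda>f x. \<Sum>m. TN m f x"], rule exI[of _ "\<lambda>f x. \<Sum>m. TR m f x"])
    using Linv_l2 L_Linv Linv_L TN_series(1) TR_series(1) part2_pt by (auto simp: fun_eq_iff)
  show ?thesis using P1 P2 by blast
qed



end
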